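(* If $\varsigma\in\pi(\mathcal O(\mathcal E_Y))$, then $\varsigma$ has the boundary decomposition property.
   Context: Let $X$ be an infinite compact metric space, $\alpha:X\to X$ a minimal homeomorphism, $\mathscr V$ a Hermitian complex line bundle over $X$, and $Y\subset X$ closed with non-empty interior. $\mathcal E=\Gamma(\mathscr V,\alpha)$ is the Hilbert $C(X)$-bimodule of continuous sections of $\mathscr V$ with right action $(\xi f)(x)=\xi(x)f(x)$, right inner product $\langle\xi(x),\eta(x)\rangle_{\mathscr V_x}$, left action $f\cdot\xi=\xi\,(f\circ\alpha)$ and left inner product $\langle\eta,\xi\rangle\circ\alpha^{-1}$. $\mathcal E_Y=C_0(X\setminus Y)\mathcal E$ and $\mathcal O(\mathcal E_Y)$ is its Cuntz–Pimsner algebra (Katsura). For $y\in Y$ let $r_Y(y)=\min\{n\ge1:\alpha^n(y)\in Y\}$, with distinct values $r_1<\dots<r_K$, and $Y_k=\{y\in Y:r_Y(y)=r_k\}$. Let $\mathscr V^{(0)}=X\times\mathbb C$ and $\mathscr V^{(n)}=(\alpha^{n-1})^*\mathscr V\otimes\cdots\otimes\alpha^*\mathscr V\otimes\mathscr V$, so $\mathscr V^{(n)}_x=\mathscr V_{\alpha^{n-1}(x)}\otimes\cdots\otimes\mathscr V_x=\mathscr V^{(n-m)}_{\alpha^m(x)}\otimes\mathscr V^{(m)}_x$ for $0\le m\le n$. Let $\mathscr D^{(n)}=\mathscr V^{(0)}\oplus\cdots\oplus\mathscr V^{(n-1)}$, $\mathscr M_k=\mathrm{End}(\mathscr D^{(r_k)})|_{\overline{Y_k}}$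 and $\Gamma(\mathscr M_k)$ the C*-algebra of its continuous sections. $\pi_k:\mathcal O(\mathcal E_Y)\to\Gamma(\mathscr M_k)$ is the $*$-homomorphism determined, for $x\in\overline{Y_k}$ and $(a_0,\dots,a_{r_k-1})\in\mathscr D^{(r_k)}_x$, by $\pi_k(f)(x)(a_0,\dots,a_{r_k-1})=(f(x)a_0,\dots,f(\alpha^{r_k-1}(x))a_{r_k-1})$ for $f\in C(X)$ and $\pi_k(\xi)(x)(a_0,\dots,a_{r_k-1})=(0,\xi(x)\otimes a_0,\dots,\xi(\alpha^{r_k-2}(x))\otimes a_{r_k-2})$ for $\xi\in\mathcal E_Y$; $\pi=\oplus_{k=1}^K\pi_k$. Boundary decomposition property: $\varsigma=(\varsigma_1,\dots,\varsigma_K)\in\Gamma(\mathscr M_1)\oplus\dots\oplus\Gamma(\mathscr M_K)$ has it if for every $k$ and every $x\in\overline{Y_k}\setminus Y_k$ the following holds. There are indices $t_1,\dots,t_m<k$ with $r_{t_1}+\dots+r_{t_m}=r_k$ and $x\in Y_{t_1}\cap\alpha^{-r_{t_1}}(Y_{t_2})\cap\dots\cap\alpha^{-(r_{t_1}+\dots+r_{t_{m-1}})}(Y_{t_m})$. Let $R_0=0$, $R_s=r_{t_1}+\dots+r_{t_s}$, and identify the $s$-th component $\mathscr V^{(R_{s-1})}_x\oplus\dots\oplus\mathscr V^{(R_s-1)}_x$ of $\mathscr D^{(r_k)}_x$ with $\mathscr D^{(r_{t_s})}_{\alpha^{R_{s-1}}(x)}\otimes\mathscr V^{(R_{s-1})}_x$.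 The requirement is that $\varsigma_k(x)$ restricted to the $s$-th component equals $\varsigma_{t_s}(\alpha^{R_{s-1}}(x))\otimes\mathrm{id}_{\mathscr V^{(R_{s-1})}_x}$ for every $s=1,\dots,m$. *)

theory Defs
  imports "HOL-Analysis.Analysis"
begin

text \<open>A Hermitian line bundle over X is modelled (up to isometric isomorphism) as a
 subbundle of the trivial bundle X x C^n: its fibre at x is the range of a
 continuous rank-one orthogonal projection P x.  Order-n tensors are functions on
 index lists of length n; the list head is the factor attached to the largest
 iterate, i.e. V^(n)_x = V_{alpha^(n-1) x} (x) ... (x) V_x.\<close>

type_synonym 'n tensor = "'n list \<Rightarrow> complex"
type_synonym 'n dvec = "nat \<Rightarrow> 'n tensor"
type_synonym ('a, 'n) fam = "nat \<Rightarrow> 'a \<Rightarrow> 'n dvec \<Rightarrow> 'n dvec"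

definition minimal_homeo :: "'a::topological_space set \<Rightarrow> ('a \<Rightarrow> 'a) \<Rightarrow> bool" where
  "minimal_homeo X \<alpha> \<longleftrightarrow> (\<exists>\<beta>. homeomorphism X X \<alpha> \<beta>) \<and>
     (\<forall>Z. Z \<subseteq> X \<longrightarrow> closedin (top_of_set X) Z \<longrightarrow> \<alpha> ` Z = Z \<longrightarrow> Z = {} \<or> Z = X)"

definition line_bundle_proj :: "'a::metric_space set \<Rightarrow> ('a \<Rightarrow> complex^'n::finite^'n) \<Rightarrow> bool" where
  "line_bundle_proj X P \<longleftrightarrow> continuous_on X P \<and>
     (\<forall>x\<in>X. P x ** P x = P x \<and> (\<chi> i j. cnj (P x $ j $ i)) = P x \<and> (\<Sum>i\<in>UNIV. P x $ i $ i) = 1)"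

definition fibre :: "('a \<Rightarrow> complex^'n::finite^'n) \<Rightarrow> 'a \<Rightarrow> (complex^'n) set" where
  "fibre P x = {v. P x *v v = v}"

definition vtens :: "complex^'n \<Rightarrow> 'n tensor \<Rightarrow> 'n tensor" where
  "vtens v t = (\<lambda>l. case l of [] \<Rightarrow> 0 | i # l' \<Rightarrow> v $ i * t l')"

fun tens :: "(nat \<Rightarrow> complex^'n) \<Rightarrow> nat \<Rightarrow> 'n tensor" where
  "tens vs 0 = (\<lambda>l. if l = [] then 1 else 0)"
| "tens vs (Suc n) = vtens (vs n) (tens vs n)"

definition fibn :: "('a \<Rightarrow> complex^'n::finite^'n) \<Rightarrow> ('a \<Rightarrow> 'a) \<Rightarrow> nat \<Rightarrow> 'a \<Rightarrow> 'n tensor set" where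
  "fibn P \<alpha> n x = {(\<lambda>l. c * tens vs n l) | c vs. \<forall>j<n. vs j \<in> fibre P ((\<alpha> ^^ j) x)}"

definition ttens :: "nat \<Rightarrow> 'n tensor \<Rightarrow> 'n tensor \<Rightarrow> 'n tensor" where
  "ttens m s t = (\<lambda>l. if m \<le> length l then s (take (length l - m) l) * t (drop (length l - m) l) else 0)"

definition Dsp :: "('a \<Rightarrow> complex^'n::finite^'n) \<Rightarrow> ('a \<Rightarrow> 'a) \<Rightarrow> nat \<Rightarrow> 'a \<Rightarrow> 'n dvec set" where
  "Dsp P \<alpha> r x = {a. (\<forall>j<r. a j \<in> fibn P \<alpha> j x) \<and> (\<forall>j\<ge>r. a j = (\<lambda>_. 0))}"

definition ipD :: "nat \<Rightarrow> 'n::finite dvec \<Rightarrow> 'n dvec \<Rightarrow> complex" where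
  "ipD r a b = (\<Sum>j<r. \<Sum>l\<in>{l. length l = j}. cnj (a j l) * b j l)"

definition normD :: "nat \<Rightarrow> 'n::finite dvec \<Rightarrow> real" where
  "normD r a = sqrt (Re (ipD r a a))"

definition adjD :: "('a \<Rightarrow> complex^'n::finite^'n) \<Rightarrow> ('a \<Rightarrow> 'a) \<Rightarrow> nat \<Rightarrow> 'a
    \<Rightarrow> ('n dvec \<Rightarrow> 'n dvec) \<Rightarrow> 'n dvec \<Rightarrow> 'n dvec" where
  "adjD P \<alpha> r x T = (\<lambda>a. THE b. b \<in> Dsp P \<alpha> r x \<and> (\<forall>c\<in>Dsp P \<alpha> r x. ipD r (T c) a = ipD r c b))"

definition rY :: "('a \<Rightarrow> 'a) \<Rightarrow> 'a set \<Rightarrow> 'a \<Rightarrow> nat" where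
  "rY \<alpha> Y y = (LEAST n. 1 \<le> n \<and> (\<alpha> ^^ n) y \<in> Y)"

definition KK :: "('a \<Rightarrow> 'a) \<Rightarrow> 'a set \<Rightarrow> nat" where
  "KK \<alpha> Y = card (rY \<alpha> Y ` Y)"

definition rr :: "('a \<Rightarrow> 'a) \<Rightarrow> 'a set \<Rightarrow> nat \<Rightarrow> nat" where
  "rr \<alpha> Y k = sorted_list_of_set (rY \<alpha> Y ` Y) ! (k - 1)"

definition Yk :: "('a \<Rightarrow> 'a) \<Rightarrow> 'a set \<Rightarrow> nat \<Rightarrow> 'a set" where
  "Yk \<alpha> Y k = {y\<in>Y. rY \<alpha> Y y = rr \<alpha> Y k}"

definition sections :: "'a::metric_space set \<Rightarrow> ('a \<Rightarrow> complex^'n::finite^'n) \<Rightarrow> ('a \<Rightarrow> complex^'n) set" where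
  "sections X P = {\<xi>. continuous_on X \<xi> \<and> (\<forall>x\<in>X. \<xi> x \<in> fibre P x)}"

text \<open>E_Y = C_0(X \ Y) E, with left action f . xi = xi (f o alpha).\<close>
definition EY :: "'a::metric_space set \<Rightarrow> ('a \<Rightarrow> complex^'n::finite^'n) \<Rightarrow> ('a \<Rightarrow> 'a) \<Rightarrow> 'a set
    \<Rightarrow> ('a \<Rightarrow> complex^'n) set" where
  "EY X P \<alpha> Y = {(\<lambda>x. f (\<alpha> x) *s \<xi> x) | f \<xi>.
      continuous_on X (f :: 'a \<Rightarrow> complex) \<and> (\<forall>y\<in>Y. f y = 0) \<and> \<xi> \<in> sections X P}"

definition piC :: "('a \<Rightarrow> 'a) \<Rightarrow> 'a set \<Rightarrow> ('a \<Rightarrow> complex) \<Rightarrow> ('a, 'n) fam" where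
  "piC \<alpha> Y f = (\<lambda>k x a j. if j < rr \<alpha> Y k then (\<lambda>l. f ((\<alpha> ^^ j) x) * a j l) else (\<lambda>_. 0))"

definition piE :: "('a \<Rightarrow> 'a) \<Rightarrow> 'a set \<Rightarrow> ('a \<Rightarrow> complex^'n) \<Rightarrow> ('a, 'n) fam" where
  "piE \<alpha> Y \<xi> = (\<lambda>k x a j. if 0 < j \<and> j < rr \<alpha> Y k
       then vtens (\<xi> ((\<alpha> ^^ (j - 1)) x)) (a (j - 1)) else (\<lambda>_. 0))"

text \<open>The image pi(O(E_Y)): the C*-subalgebra of the direct sum of the section
 algebras generated by pi(C(X)) and pi(E_Y) (closure in the sup-norm).\<close>
inductive_set piImg :: "('a::metric_space \<Rightarrow> complex^'n::finite^'n) \<Rightarrow> ('a \<Rightarrow> 'a) \<Rightarrow> 'a set \<Rightarrow> 'a set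
    \<Rightarrow> ('a, 'n) fam set"
  for P :: "'a::metric_space \<Rightarrow> complex^'n::finite^'n" and \<alpha> X Y where
  gen_C: "continuous_on X f \<Longrightarrow> piC \<alpha> Y f \<in> piImg P \<alpha> X Y"
| gen_E: "\<xi> \<in> EY X P \<alpha> Y \<Longrightarrow> piE \<alpha> Y \<xi> \<in> piImg P \<alpha> X Y"
| add: "\<sigma> \<in> piImg P \<alpha> X Y \<Longrightarrow> \<tau> \<in> piImg P \<alpha> X Y \<Longrightarrow>
        (\<lambda>k x a j l. \<sigma> k x a j l + \<tau> k x a j l) \<in> piImg P \<alpha> X Y"
| smult: "\<sigma> \<in> piImg P \<alpha> X Y \<Longrightarrow> (\<lambda>k x a j l. c * \<sigma> k x a j l) \<in> piImg P \<alpha> X Y"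
| comp: "\<sigma> \<in> piImg P \<alpha> X Y \<Longrightarrow> \<tau> \<in> piImg P \<alpha> X Y \<Longrightarrow>
        (\<lambda>k x. \<sigma> k x \<circ> \<tau> k x) \<in> piImg P \<alpha> X Y"
| adj: "\<sigma> \<in> piImg P \<alpha> X Y \<Longrightarrow> (\<lambda>k x. adjD P \<alpha> (rr \<alpha> Y k) x (\<sigma> k x)) \<in> piImg P \<alpha> X Y"
| lim: "(\<And>n::nat. g n \<in> piImg P \<alpha> X Y) \<Longrightarrow>
        (\<forall>k\<in>{1..KK \<alpha> Y}. \<forall>x\<in>closure (Yk \<alpha> Y k). \<forall>a\<in>Dsp P \<alpha> (rr \<alpha> Y k) x.
            h k x a \<in> Dsp P \<alpha> (rr \<alpha> Y k) x) \<Longrightarrow>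
        (\<forall>e>0. \<exists>N. \<forall>n\<ge>N. \<forall>k\<in>{1..KK \<alpha> Y}. \<forall>x\<in>closure (Yk \<alpha> Y k). \<forall>a\<in>Dsp P \<alpha> (rr \<alpha> Y k) x.
            normD (rr \<alpha> Y k) (\<lambda>j l. g n k x a j l - h k x a j l) \<le> e * normD (rr \<alpha> Y k) a) \<Longrightarrow>
        h \<in> piImg P \<alpha> X Y"

text \<open>Embedding of D^(r)_{alpha^R x} (x) V^(R)_x as the block of positions R..R+r-1.\<close>
definition inj_comp :: "nat \<Rightarrow> nat \<Rightarrow> 'n dvec \<Rightarrow> 'n tensor \<Rightarrow> 'n dvec" where
  "inj_comp R r b c = (\<lambda>i. if R \<le> i \<and> i < R + r then ttens R (b (i - R)) c else (\<lambda>_. 0))"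

definition bdp :: "('a \<Rightarrow> complex^'n::finite^'n) \<Rightarrow> ('a::topological_space \<Rightarrow> 'a) \<Rightarrow> 'a set
    \<Rightarrow> ('a, 'n) fam \<Rightarrow> bool" where
  "bdp P \<alpha> Y \<sigma> \<longleftrightarrow>
    (\<forall>k\<in>{1..KK \<alpha> Y}. \<forall>x\<in>closure (Yk \<alpha> Y k) - Yk \<alpha> Y k. \<forall>ts.
      (\<forall>t\<in>set ts. 1 \<le> t \<and> t < k) \<and> sum_list (map (rr \<alpha> Y) ts) = rr \<alpha> Y k \<and>
      (\<forall>s<length ts. (\<alpha> ^^ sum_list (map (rr \<alpha> Y) (take s ts))) x \<in> Yk \<alpha> Y (ts ! s))
      \<longrightarrow> (\<forall>s<length ts.
            \<forall>b\<in>Dsp P \<alpha> (rr \<alpha> Y (ts ! s)) ((\<alpha> ^^ sum_list (map (rr \<alpha> Y) (take s ts))) x).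
            \<forall>c\<in>fibn P \<alpha> (sum_list (map (rr \<alpha> Y) (take s ts))) x.
              \<sigma> k x (inj_comp (sum_list (map (rr \<alpha> Y) (take s ts))) (rr \<alpha> Y (ts ! s)) b c)
              = inj_comp (sum_list (map (rr \<alpha> Y) (take s ts))) (rr \<alpha> Y (ts ! s))
                  (\<sigma> (ts ! s) ((\<alpha> ^^ sum_list (map (rr \<alpha> Y) (take s ts))) x) b) c))"

end

theory Submission
  imports Defs
begin
lemma cnj_sq: "cnj z * z = complex_of_real ((cmod z)\<^sup>2)"
  by (subst complex_norm_square) (rule mult.commute)

lemma rank_one_scalar:
  fixes p :: "'n::finite \<Rightarrow> 'n \<Rightarrow> complex"
  assumes idem: "\<And>a b. (\<Sum>k\<in>UNIV. p a k * p k b) = p a b"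
    and herm: "\<And>a b. cnj (p b a) = p a b" and tr: "(\<Sum>i\<in>UNIV. p i i) = 1"
  obtains i where "p i i \<noteq> 0" "\<And>a b. p a b = p a i * p i b / p i i"
proof -
  obtain i where di: "p i i \<noteq> 0"
    using tr by (metis (mono_tags, lifting) sum.neutral zero_neq_one)
  define d where "d = p i i"
  have dd: "cnj d = d" using herm[of i i] d_def by simp
  define q where "q a b = p a b - p a i * p i b / d" for a b
  have e1: "cnj (q a b) = p b a - p b i * p i a / d" for a b
    unfolding q_def using herm dd by (simp add: )
  have pt: "cnj (q a b) * q a b = p b a * p a b - p b a * p a i * p i b / d
      - p b i * p i a * p a b / d + (p i a * p a i) * (p b i * p i b) / (d*d)" for a b
    unfolding e1 unfolding q_def using di d_def by (simp add: field_simps)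
  have T1: "(\<Sum>a\<in>UNIV. \<Sum>b\<in>UNIV. p b a * p a b) = 1"
    using idem tr by (subst sum.swap) simp
  have T2: "(\<Sum>a\<in>UNIV. \<Sum>b\<in>UNIV. p b a * p a i * p i b / d) = 1"
  proof -
    have "(\<Sum>a\<in>UNIV. \<Sum>b\<in>UNIV. p b a * p a i * p i b / d) = (\<Sum>b\<in>UNIV. (\<Sum>a\<in>UNIV. p b a * p a i) * p i b / d)"
      by (subst sum.swap) (simp add: sum_distrib_right sum_divide_distrib)
    also have "\<dots> = (\<Sum>b\<in>UNIV. p i b * p b i) / d" using idem by (simp add: sum_divide_distrib mult.commute)
    also have "\<dots> = 1" using idem di d_def by simp
    finally show ?thesis .
  qed
  have T3: "(\<Sum>a\<in>UNIV. \<Sum>b\<in>UNIV. p b i * p i a * p a b / d) = 1"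
  proof -
    have inner: "(\<Sum>a\<in>UNIV. p b i * p i a * p a b / d) = p b i * p i b / d" for b
    proof -
      have "(\<Sum>a\<in>UNIV. p b i * p i a * p a b / d) = p b i * (\<Sum>a\<in>UNIV. p i a * p a b) / d"
        by (simp add: sum_distrib_left sum_divide_distrib mult.assoc)
      thus ?thesis using idem by simp
    qed
    have "(\<Sum>a\<in>UNIV. \<Sum>b\<in>UNIV. p b i * p i a * p a b / d) = (\<Sum>b\<in>UNIV. p b i * p i b / d)"
      by (subst sum.swap) (simp add: inner)
    also have "\<dots> = (\<Sum>b\<in>UNIV. p i b * p b i) / d" by (simp add: sum_divide_distrib mult.commute)
    also have "\<dots> = 1" using idem di d_def by simp
    finally show ?thesis .
  qed
  have T4: "(\<Sum>a\<in>UNIV. \<Sum>b\<in>UNIV. (p i a * p a i) * (p b i * p i b) / (d*d)) = 1"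
  proof -
    have "(\<Sum>a\<in>UNIV. \<Sum>b\<in>UNIV. (p i a * p a i) * (p b i * p i b) / (d*d))
        = (\<Sum>a\<in>UNIV. p i a * p a i) * (\<Sum>b\<in>UNIV. p i b * p b i) / (d*d)"
      by (simp add: sum_distrib_left sum_distrib_right sum_divide_distrib mult.commute)
    also have "\<dots> = 1" using idem di d_def by simp
    finally show ?thesis .
  qed
  have "(\<Sum>a\<in>UNIV. \<Sum>b\<in>UNIV. cnj (q a b) * q a b) = 0"
    by (simp only: pt sum.distrib sum_subtractf T1 T2 T3 T4) simp
  hence S0: "(\<Sum>a\<in>UNIV. \<Sum>b\<in>UNIV. (cmod (q a b))\<^sup>2) = 0"
  proof -
    assume h: "(\<Sum>a\<in>UNIV. \<Sum>b\<in>UNIV. cnj (q a b) * q a b) = 0"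
    have "complex_of_real (\<Sum>a\<in>UNIV. \<Sum>b\<in>UNIV. (cmod (q a b))\<^sup>2) = (\<Sum>a\<in>UNIV. \<Sum>b\<in>UNIV. cnj (q a b) * q a b)"
      by (simp only: of_real_sum cnj_sq)
    with h show ?thesis by (simp only: of_real_eq_0_iff)
  qed
  have A0: "\<forall>a\<in>UNIV. (\<Sum>b\<in>UNIV. (cmod (q a b))\<^sup>2) = 0"
    using S0 by (subst (asm) sum_nonneg_eq_0_iff) (auto intro: sum_nonneg)
  have qz: "q a b = 0" for a b
  proof -
    have "(\<Sum>b\<in>UNIV. (cmod (q a b))\<^sup>2) = 0" using A0 by blast
    hence "\<forall>b\<in>UNIV. (cmod (q a b))\<^sup>2 = 0" by (subst (asm) sum_nonneg_eq_0_iff) auto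
    thus ?thesis by simp
  qed
  have "p a b = p a i * p i b / p i i" for a b
    using qz[of a b] unfolding q_def d_def by (simp only: right_minus_eq)
  thus ?thesis using that di by blast
qed

lemma fibre_one_dim:
  fixes P :: "'a::metric_space \<Rightarrow> complex^'n::finite^'n"
  assumes "line_bundle_proj X P" "w \<in> X"
  shows "\<exists>u. u \<noteq> 0 \<and> P w *v u = u \<and> (\<forall>v. P w *v v = v \<longrightarrow> (\<exists>c. v = c *s u))"
proof -
  define p where "p a b = P w $ a $ b" for a b
  have H: "P w ** P w = P w \<and> (\<chi> i j. cnj (P w $ j $ i)) = P w \<and> (\<Sum>i\<in>UNIV. P w $ i $ i) = 1"
    using assms unfolding line_bundle_proj_def by blast
  have idem: "(\<Sum>k\<in>UNIV. p a k * p k b) = p a b" for a b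
  proof -
    have "(P w ** P w) $ a $ b = P w $ a $ b" using H by simp
    thus ?thesis unfolding p_def matrix_matrix_mult_def by simp
  qed
  have herm: "cnj (p b a) = p a b" for a b
  proof -
    have "(\<chi> i j. cnj (P w $ j $ i)) $ a $ b = P w $ a $ b" using H by simp
    thus ?thesis unfolding p_def by simp
  qed
  have tr: "(\<Sum>i\<in>UNIV. p i i) = 1" using H p_def by simp
  obtain i where di: "p i i \<noteq> 0" and pf: "\<And>a b. p a b = p a i * p i b / p i i"
    using rank_one_scalar[OF idem herm tr] by blast
  define u where "u = (\<chi> a. p a i)"
  have "u \<noteq> 0" using di unfolding u_def by (metis vec_lambda_beta zero_index)
  moreover have "P w *v u = u"
  proof -
    have "(\<Sum>b\<in>UNIV. P w $ a $ b * p b i) = p a i" for a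
      using idem[of a i] unfolding p_def by simp
    thus ?thesis unfolding u_def matrix_vector_mult_def by (simp add: vec_eq_iff p_def)
  qed
  moreover have "\<exists>c. v = c *s u" if "P w *v v = v" for v
  proof -
    have "v $ a = (\<Sum>b\<in>UNIV. p a b * v $ b)" for a
    proof -
      have "v $ a = (P w *v v) $ a" using that by simp
      thus ?thesis by (simp add: matrix_vector_mult_def p_def)
    qed
    also have "(\<Sum>b\<in>UNIV. p a b * v $ b) = ((\<Sum>b\<in>UNIV. p i b * v $ b) / p i i) * u $ a" for a
    proof -
      have "(\<Sum>b\<in>UNIV. p a b * v $ b) = (\<Sum>b\<in>UNIV. p a i * (p i b * v $ b) / p i i)"
        by (rule sum.cong[OF refl]) (subst pf, simp)
      also have "\<dots> = p a i * (\<Sum>b\<in>UNIV. p i b * v $ b) / p i i"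
        by (simp add: sum_distrib_left sum_divide_distrib)
      finally show ?thesis by (simp add: u_def)
    qed
    finally have eq: "v $ a = ((\<Sum>b\<in>UNIV. p i b * v $ b) / p i i) * u $ a" for a .
    show ?thesis
    proof (intro exI[of _ "(\<Sum>b\<in>UNIV. p i b * v $ b) / p i i"] iffD2[OF vec_eq_iff] allI)
      fix a show "v $ a = ((\<Sum>b\<in>UNIV. p i b * v $ b) / p i i *s u) $ a"
        unfolding vector_smult_component by (rule eq)
    qed
  qed
  ultimately show ?thesis by blast
qed

lemma tens_supp: "length l \<noteq> n \<Longrightarrow> tens vs n l = 0"
proof (induction n arbitrary: l)
  case 0 thus ?case by simp
next
  case (Suc n) thus ?case by (cases l) (auto simp: vtens_def)
qed

lemma tens_cong: "(\<And>m. m < n \<Longrightarrow> vs m = vs' m) \<Longrightarrow> tens vs n = tens vs' n"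
  by (induction n) auto

lemma vtens_ttens: "vtens v (ttens R s c) = ttens R (vtens v s) c"
proof (rule ext)
  fix l :: "'a list"
  show "vtens v (ttens R s c) l = ttens R (vtens v s) c l"
  proof (cases l)
    case Nil thus ?thesis by (simp add: vtens_def ttens_def)
  next
    case (Cons a l')
    show ?thesis
    proof (cases "R \<le> length l'")
      case True
      hence "Suc (length l') - R = Suc (length l' - R)" by simp
      thus ?thesis using True Cons by (simp add: vtens_def ttens_def)
    next
      case False
      thus ?thesis using Cons
        by (cases "R = Suc (length l')") (simp_all add: vtens_def ttens_def)
    qed
  qed
qed

lemma tens_split: "tens vs (R + i) = ttens R (tens (\<lambda>m. vs (m + R)) i) (tens vs R)"
proof (induction i)
  case 0
  show ?case
  proof (rule ext)
    fix l :: "'a list"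
    show "tens vs (R + 0) l = ttens R (tens (\<lambda>m. vs (m + R)) 0) (tens vs R) l"
      by (cases "length l = R") (auto simp: ttens_def tens_supp)
  qed
next
  case (Suc i)
  have "tens vs (R + Suc i) = vtens (vs (R + i)) (tens vs (R + i))" by simp
  also have "\<dots> = ttens R (vtens (vs (R + i)) (tens (\<lambda>m. vs (m + R)) i)) (tens vs R)"
    using Suc by (simp add: vtens_ttens)
  finally show ?case by (simp add: add.commute)
qed

lemma vtens_scale: "vtens (c *s u) t = (\<lambda>l. c * vtens u t l)"
  by (auto simp: vtens_def split: list.split)

lemma vtens_scale2: "vtens v (\<lambda>l. c * t l) = (\<lambda>l. c * vtens v t l)"
  by (auto simp: vtens_def split: list.split)

lemma vtens_add: "vtens v (\<lambda>l. s l + t l) = (\<lambda>l. vtens v s l + vtens v t l)"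
  by (auto simp: vtens_def algebra_simps split: list.split)

lemma vtens_zero: "vtens v (\<lambda>_. 0) = (\<lambda>_. 0)"
  by (auto simp: vtens_def split: list.split)

lemma tens_scale: "(\<And>m. m < n \<Longrightarrow> vs m = cs m *s us m) \<Longrightarrow>
    tens vs n = (\<lambda>l. (\<Prod>m<n. cs m) * tens us n l)"
proof (induction n)
  case 0 thus ?case by auto
next
  case (Suc n)
  have "tens vs (Suc n) = vtens (cs n *s us n) (tens vs n)" using Suc.prems by simp
  also have "\<dots> = vtens (cs n *s us n) (\<lambda>l. (\<Prod>m<n. cs m) * tens us n l)"
    using Suc by simp
  also have "\<dots> = (\<lambda>l. cs n * vtens (us n) (\<lambda>l. (\<Prod>m<n. cs m) * tens us n l) l)"
    by (rule vtens_scale)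
  also have "\<dots> = (\<lambda>l. cs n * ((\<Prod>m<n. cs m) * vtens (us n) (tens us n) l))"
    by (simp only: vtens_scale2)
  also have "\<dots> = (\<lambda>l. (\<Prod>m<Suc n. cs m) * tens us (Suc n) l)"
    by (simp add: fun_eq_iff mult_ac)
  finally show ?case .
qed

lemma ttens_scale: "ttens R (\<lambda>l. c1 * s l) (\<lambda>l. c2 * t l) = (\<lambda>l. (c1 * c2) * ttens R s t l)"
  by (auto simp: ttens_def)

lemma ttens_add: "ttens R (\<lambda>l. s1 l + s2 l) t = (\<lambda>l. ttens R s1 t l + ttens R s2 t l)"
  by (auto simp: ttens_def algebra_simps)

lemma ttens_smult: "ttens R (\<lambda>l. c * s l) t = (\<lambda>l. c * ttens R s t l)"
  by (auto simp: ttens_def)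

lemma ttens_zero: "ttens R (\<lambda>_. 0) t = (\<lambda>_. 0)"
  by (auto simp: ttens_def)

lemma ttens_diff: "ttens R (\<lambda>l. s1 l - s2 l) t = (\<lambda>l. ttens R s1 t l - ttens R s2 t l)"
  by (auto simp: ttens_def algebra_simps)

lemma fibre_zero: "0 \<in> fibre P x"
  by (simp add: fibre_def)

lemma fibre_smult: "v \<in> fibre P x \<Longrightarrow> c *s v \<in> fibre P x"
  by (simp add: fibre_def vector_scalar_commute)

lemma fibn_zero: "(\<lambda>_. 0) \<in> fibn P \<alpha> j x"
  unfolding fibn_def
  by (rule CollectI, rule exI[of _ 0], rule exI[of _ "\<lambda>_. 0"]) (simp add: fibre_zero)

lemma fibn_smult: "t \<in> fibn P \<alpha> j x \<Longrightarrow> (\<lambda>l. c * t l) \<in> fibn P \<alpha> j x"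
  unfolding fibn_def
proof (elim CollectE exE conjE)
  fix ca vs assume "t = (\<lambda>l. ca * tens vs j l)" "\<forall>j'<j. vs j' \<in> fibre P ((\<alpha> ^^ j') x)"
  thus "(\<lambda>l. c * t l) \<in> {\<lambda>l. c * tens vs j l |c vs. \<forall>j'<j. vs j' \<in> fibre P ((\<alpha> ^^ j') x)}"
    by (intro CollectI exI[of _ "c * ca"] exI[of _ vs]) (simp add: mult.assoc)
qed

lemma fibn_supp: "t \<in> fibn P \<alpha> j x \<Longrightarrow> length l \<noteq> j \<Longrightarrow> t l = 0"
  unfolding fibn_def by (auto simp: tens_supp)

lemma funpow_shift: "(\<alpha> ^^ m) ((\<alpha> ^^ R) x) = (\<alpha> ^^ (m + R)) x"
  by (simp add: funpow_add)

lemma fibn_ttens: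
  assumes "s \<in> fibn P \<alpha> i ((\<alpha> ^^ R) x)" "c \<in> fibn P \<alpha> R x"
  shows "ttens R s c \<in> fibn P \<alpha> (R + i) x"
proof -
  obtain c1 vs1 where s: "s = (\<lambda>l. c1 * tens vs1 i l)" and v1: "\<forall>m<i. vs1 m \<in> fibre P ((\<alpha> ^^ m) ((\<alpha> ^^ R) x))"
    using assms(1) unfolding fibn_def by blast
  obtain c2 vs2 where c: "c = (\<lambda>l. c2 * tens vs2 R l)" and v2: "\<forall>m<R. vs2 m \<in> fibre P ((\<alpha> ^^ m) x)"
    using assms(2) unfolding fibn_def by blast
  define vs where "vs m = (if m < R then vs2 m else vs1 (m - R))" for m
  have "tens vs (R + i) = ttens R (tens (\<lambda>m. vs (m + R)) i) (tens vs R)" by (rule tens_split)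
  also have "tens (\<lambda>m. vs (m + R)) i = tens vs1 i" by (rule tens_cong) (simp add: vs_def)
  also have "tens vs R = tens vs2 R" by (rule tens_cong) (simp add: vs_def)
  finally have e: "tens vs (R + i) = ttens R (tens vs1 i) (tens vs2 R)" .
  have mem: "\<forall>m<R + i. vs m \<in> fibre P ((\<alpha> ^^ m) x)"
  proof (intro allI impI)
    fix m assume "m < R + i"
    show "vs m \<in> fibre P ((\<alpha> ^^ m) x)"
    proof (cases "m < R")
      case True thus ?thesis using v2 by (simp add: vs_def)
    next
      case False
      hence "m - R < i" "m - R + R = m" using \<open>m < R + i\<close> by auto
      thus ?thesis using v1 False by (auto simp: vs_def funpow_shift)
    qed
  qed
  have "ttens R s c = (\<lambda>l. (c1 * c2) * tens vs (R + i) l)"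
    unfolding s c ttens_scale e ..
  thus ?thesis using mem unfolding fibn_def by blast
qed

lemma fibn_vtens:
  assumes "t \<in> fibn P \<alpha> j x" "v \<in> fibre P ((\<alpha> ^^ j) x)"
  shows "vtens v t \<in> fibn P \<alpha> (Suc j) x"
proof -
  obtain c vs where t: "t = (\<lambda>l. c * tens vs j l)" and vv: "\<forall>m<j. vs m \<in> fibre P ((\<alpha> ^^ m) x)"
    using assms(1) unfolding fibn_def by blast
  define vs' where "vs' = vs(j := v)"
  have "tens vs' j = tens vs j" by (rule tens_cong) (simp add: vs'_def)
  hence "tens vs' (Suc j) = vtens v (tens vs j)" by (simp add: vs'_def)
  hence "vtens v t = (\<lambda>l. c * tens vs' (Suc j) l)" by (simp add: t vtens_scale2)
  moreover have "\<forall>m<Suc j. vs' m \<in> fibre P ((\<alpha> ^^ m) x)"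
    using vv assms(2) by (auto simp: vs'_def less_Suc_eq)
  ultimately show ?thesis unfolding fibn_def by blast
qed

lemma finite_len: "finite {l::'n::finite list. length l = j}"
  using finite_lists_length_eq[of "UNIV::'n set" j] by simp


lemma sum_cnj_nz:
  assumes "finite A" "a \<in> A" "f a \<noteq> (0::complex)"
  shows "(\<Sum>l\<in>A. cnj (f l) * f l) \<noteq> 0"
proof -
  have "(\<Sum>l\<in>A. cnj (f l) * f l) = complex_of_real (\<Sum>l\<in>A. (cmod (f l))\<^sup>2)"
    by (simp only: of_real_sum cnj_sq)
  moreover have "0 < (\<Sum>l\<in>A. (cmod (f l))\<^sup>2)"
    using assms by (intro sum_pos2[of A a]) auto
  ultimately show ?thesis by (simp only: of_real_eq_0_iff)
qed

lemma ipD_add2: "ipD r a (\<lambda>j l. b1 j l + b2 j l) = ipD r a b1 + ipD r a b2"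
  by (simp add: ipD_def distrib_left sum.distrib)

lemma ipD_diff2: "ipD r a (\<lambda>j l. b1 j l - b2 j l) = ipD r a b1 - ipD r a b2"
  by (simp add: ipD_def right_diff_distrib sum_subtractf)

lemma ipD_smult2: "ipD r a (\<lambda>j l. c * b j l) = c * ipD r a b"
  by (simp add: ipD_def sum_distrib_left mult.left_commute)

lemma ipD_smult1: "ipD r (\<lambda>j l. c * a j l) b = cnj c * ipD r a b"
  by (simp add: ipD_def sum_distrib_left mult.assoc)

lemma ipD_sum1: "ipD r (\<lambda>j l. \<Sum>m\<in>S. F m j l) b = (\<Sum>m\<in>S. ipD r (F m) b)"
proof -
  have "ipD r (\<lambda>j l. \<Sum>m\<in>S. F m j l) b = (\<Sum>j<r. \<Sum>l\<in>{l. length l = j}. \<Sum>m\<in>S. cnj (F m j l) * b j l)"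
    by (simp add: ipD_def cnj_sum sum_distrib_right)
  also have "\<dots> = (\<Sum>j<r. \<Sum>m\<in>S. \<Sum>l\<in>{l. length l = j}. cnj (F m j l) * b j l)"
    by (rule sum.cong[OF refl], rule sum.swap)
  also have "\<dots> = (\<Sum>m\<in>S. \<Sum>j<r. \<Sum>l\<in>{l. length l = j}. cnj (F m j l) * b j l)"
    by (rule sum.swap)
  finally show ?thesis by (simp add: ipD_def)
qed

lemma ipD_sum2: "ipD r a (\<lambda>j l. \<Sum>m\<in>S. F m j l) = (\<Sum>m\<in>S. ipD r a (F m))"
proof -
  have "ipD r a (\<lambda>j l. \<Sum>m\<in>S. F m j l) = (\<Sum>j<r. \<Sum>l\<in>{l. length l = j}. \<Sum>m\<in>S. cnj (a j l) * F m j l)"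
    by (simp add: ipD_def sum_distrib_left)
  also have "\<dots> = (\<Sum>j<r. \<Sum>m\<in>S. \<Sum>l\<in>{l. length l = j}. cnj (a j l) * F m j l)"
    by (rule sum.cong[OF refl], rule sum.swap)
  also have "\<dots> = (\<Sum>m\<in>S. \<Sum>j<r. \<Sum>l\<in>{l. length l = j}. cnj (a j l) * F m j l)"
    by (rule sum.swap)
  finally show ?thesis by (simp add: ipD_def)
qed

lemma ipD_self: "ipD r a a = complex_of_real (\<Sum>j<r. \<Sum>l\<in>{l. length l = j}. (cmod (a j l))\<^sup>2)"
  unfolding ipD_def by (simp only: of_real_sum cnj_sq)

lemma ipD_self_zero:
  fixes a :: "'n::finite dvec"
  assumes "ipD r a a = 0" "j < r" "length l = j"
  shows "a j l = 0"
proof -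
  have S: "(\<Sum>j<r. \<Sum>l\<in>{l. length l = j}. (cmod (a j l))\<^sup>2) = 0"
    using assms(1) unfolding ipD_self by (simp only: of_real_eq_0_iff)
  have "\<forall>j\<in>{..<r}. (\<Sum>l\<in>{l. length l = j}. (cmod (a j l))\<^sup>2) = 0"
    using S by (subst (asm) sum_nonneg_eq_0_iff) (auto intro: sum_nonneg)
  hence "(\<Sum>l\<in>{l. length l = j}. (cmod (a j l))\<^sup>2) = 0" using assms by auto
  hence "\<forall>l\<in>{l. length l = j}. (cmod (a j l))\<^sup>2 = 0"
    by (subst (asm) sum_nonneg_eq_0_iff) (auto simp: finite_len)
  thus ?thesis using assms by auto
qed

lemma coord_le_normD:
  fixes a :: "'n::finite dvec"
  assumes "j < r" "length l = j"
  shows "cmod (a j l) \<le> normD r a"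
proof -
  have "(cmod (a j l))\<^sup>2 \<le> (\<Sum>l\<in>{l. length l = j}. (cmod (a j l))\<^sup>2)"
    using assms by (intro member_le_sum) (auto simp: finite_len)
  also have "\<dots> \<le> (\<Sum>j<r. \<Sum>l\<in>{l. length l = j}. (cmod (a j l))\<^sup>2)"
    using assms by (intro member_le_sum) (auto intro: sum_nonneg)
  finally have "(cmod (a j l))\<^sup>2 \<le> Re (ipD r a a)" by (simp add: ipD_self)
  hence "sqrt ((cmod (a j l))\<^sup>2) \<le> sqrt (Re (ipD r a a))" by (rule real_sqrt_le_mono)
  thus ?thesis by (simp add: normD_def)
qed

lemma normD_nonneg: "0 \<le> normD r a"
  by (simp add: normD_def ipD_self sum_nonneg)

section \<open>Abstract one-dimensional-fibre spaces\<close>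

definition lin_on :: "'n dvec set \<Rightarrow> ('n dvec \<Rightarrow> 'n dvec) \<Rightarrow> bool" where
  "lin_on D T \<longleftrightarrow> (\<forall>a\<in>D. \<forall>b\<in>D. T (\<lambda>j l. a j l + b j l) = (\<lambda>j l. T a j l + T b j l)) \<and>
     (\<forall>a\<in>D. \<forall>c. T (\<lambda>j l. c * a j l) = (\<lambda>j l. c * T a j l))"

definition DE :: "nat \<Rightarrow> (nat \<Rightarrow> 'n tensor) \<Rightarrow> 'n dvec set" where
  "DE r E = {a. (\<forall>j<r. \<exists>c. a j = (\<lambda>l. c * E j l)) \<and> (\<forall>j\<ge>r. a j = (\<lambda>_. 0))}"

lemma DE_zero: "(\<lambda>_ _. 0) \<in> DE r E"
  unfolding DE_def by (auto intro: exI[of _ 0])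

lemma DE_add: "a \<in> DE r E \<Longrightarrow> b \<in> DE r E \<Longrightarrow> (\<lambda>j l. a j l + b j l) \<in> DE r E"
  unfolding DE_def
proof (safe)
  fix j assume A: "\<forall>j<r. \<exists>c. a j = (\<lambda>l. c * E j l)" and B: "\<forall>j<r. \<exists>c. b j = (\<lambda>l. c * E j l)" and "j < r"
  then obtain c1 c2 where "a j = (\<lambda>l. c1 * E j l)" "b j = (\<lambda>l. c2 * E j l)" by blast
  thus "\<exists>c. (\<lambda>l. a j l + b j l) = (\<lambda>l. c * E j l)"
    by (intro exI[of _ "c1 + c2"]) (auto simp: fun_eq_iff distrib_right)
qed auto

lemma DE_smult: "a \<in> DE r E \<Longrightarrow> (\<lambda>j l. c * a j l) \<in> DE r E"
  unfolding DE_def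
proof (safe)
  fix j assume A: "\<forall>j<r. \<exists>c. a j = (\<lambda>l. c * E j l)" and "j < r"
  then obtain c1 where "a j = (\<lambda>l. c1 * E j l)" by blast
  thus "\<exists>c'. (\<lambda>l. c * a j l) = (\<lambda>l. c' * E j l)"
    by (intro exI[of _ "c * c1"]) (auto simp: fun_eq_iff)
qed auto

lemma DE_diff: "a \<in> DE r E \<Longrightarrow> b \<in> DE r E \<Longrightarrow> (\<lambda>j l. a j l - b j l) \<in> DE r E"
proof -
  assume "a \<in> DE r E" "b \<in> DE r E"
  hence "(\<lambda>j l. a j l + (\<lambda>j l. (-1) * b j l) j l) \<in> DE r E" by (intro DE_add DE_smult)
  thus ?thesis by simp
qed

lemma DE_sum: "finite S \<Longrightarrow> (\<And>m. m \<in> S \<Longrightarrow> F m \<in> DE r E) \<Longrightarrow> (\<lambda>j l. \<Sum>m\<in>S. F m j l) \<in> DE r E"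
proof (induction S rule: finite_induct)
  case empty thus ?case using DE_zero by simp
next
  case (insert x S)
  hence "(\<lambda>j l. F x j l + (\<lambda>j l. \<Sum>m\<in>S. F m j l) j l) \<in> DE r E" by (intro DE_add) auto
  thus ?case using insert by simp
qed

lemma lin_addD: "lin_on D T \<Longrightarrow> a \<in> D \<Longrightarrow> b \<in> D \<Longrightarrow> T (\<lambda>j l. a j l + b j l) = (\<lambda>j l. T a j l + T b j l)"
  unfolding lin_on_def by blast

lemma lin_smultD: "lin_on D T \<Longrightarrow> a \<in> D \<Longrightarrow> T (\<lambda>j l. c * a j l) = (\<lambda>j l. c * T a j l)"
  unfolding lin_on_def by blast

lemma lin_zero: "lin_on D T \<Longrightarrow> (\<lambda>_ _. 0) \<in> D \<Longrightarrow> T (\<lambda>_ _. 0) = (\<lambda>_ _. 0)"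
proof -
  assume l: "lin_on D T" and z: "(\<lambda>_ _. 0) \<in> D"
  have "T (\<lambda>j l. 0 * (\<lambda>_ _. 0) j l) = (\<lambda>j l. 0 * T (\<lambda>_ _. 0) j l)" by (rule lin_smultD[OF l z])
  thus ?thesis by simp
qed

lemma lin_sum:
  assumes "lin_on (DE r E) T" "finite S" "\<And>m. m \<in> S \<Longrightarrow> F m \<in> DE r E"
  shows "T (\<lambda>j l. \<Sum>m\<in>S. F m j l) = (\<lambda>j l. \<Sum>m\<in>S. T (F m) j l)"
  using assms(2,3)
proof (induction S rule: finite_induct)
  case empty thus ?case using lin_zero[OF assms(1) DE_zero] by simp
next
  case (insert x S)
  have "T (\<lambda>j l. \<Sum>m\<in>insert x S. F m j l) = T (\<lambda>j l. F x j l + (\<lambda>j l. \<Sum>m\<in>S. F m j l) j l)"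
    using insert by simp
  also have "\<dots> = (\<lambda>j l. T (F x) j l + T (\<lambda>j l. \<Sum>m\<in>S. F m j l) j l)"
  proof -
    have m1: "F x \<in> DE r E" using insert.prems by simp
    have m2: "(\<lambda>j l. \<Sum>m\<in>S. F m j l) \<in> DE r E"
      by (rule DE_sum[OF insert.hyps(1)]) (use insert.prems in auto)
    show ?thesis by (rule lin_addD[OF assms(1) m1 m2])
  qed
  also have "\<dots> = (\<lambda>j l. \<Sum>m\<in>insert x S. T (F m) j l)" using insert by simp
  finally show ?case .
qed

definition nE :: "(nat \<Rightarrow> 'n tensor) \<Rightarrow> nat \<Rightarrow> complex" where
  "nE E j = (\<Sum>l\<in>{l. length l = j}. cnj (E j l) * E j l)"

definition bas :: "(nat \<Rightarrow> 'n tensor) \<Rightarrow> nat \<Rightarrow> 'n dvec" where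
  "bas E j = (\<lambda>i. if i = j then E j else (\<lambda>_. 0))"

definition coef :: "(nat \<Rightarrow> 'n tensor) \<Rightarrow> nat \<Rightarrow> 'n dvec \<Rightarrow> complex" where
  "coef E j a = (\<Sum>l\<in>{l. length l = j}. cnj (E j l) * a j l) / nE E j"

lemma bas_in: "j < r \<Longrightarrow> bas E j \<in> DE r E"
  unfolding DE_def bas_def by (auto intro: exI[of _ 1] exI[of _ 0])

lemma coef_eq:
  assumes "a \<in> DE r E" "j < r" "nE E j \<noteq> 0"
  shows "a j = (\<lambda>l. coef E j a * E j l)"
proof -
  obtain c where c: "a j = (\<lambda>l. c * E j l)" using assms unfolding DE_def by blast
  have "coef E j a = c * nE E j / nE E j"
    unfolding coef_def nE_def c by (simp add: sum_distrib_left mult.left_commute)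
  hence "coef E j a = c" using assms by simp
  thus ?thesis using c by simp
qed

lemma DE_decomp:
  assumes "a \<in> DE r E" "\<And>j. j < r \<Longrightarrow> nE E j \<noteq> 0"
  shows "a = (\<lambda>i l. \<Sum>j<r. coef E j a * bas E j i l)"
proof (intro ext)
  fix i l
  show "a i l = (\<Sum>j<r. coef E j a * bas E j i l)"
  proof (cases "i < r")
    case True
    have "(\<Sum>j<r. coef E j a * bas E j i l) = (\<Sum>j<r. if j = i then coef E j a * E j l else 0)"
      by (rule sum.cong) (auto simp: bas_def)
    also have "\<dots> = coef E i a * E i l" using True by (simp add: sum.delta)
    finally have "(\<Sum>j<r. coef E j a * bas E j i l) = coef E i a * E i l" .
    thus ?thesis using coef_eq[OF assms(1) True assms(2)[OF True]] by simp
  next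
    case False
    hence "a i = (\<lambda>_. 0)" using assms unfolding DE_def by auto
    moreover have "(\<Sum>j<r. coef E j a * bas E j i l) = 0"
      using False by (intro sum.neutral) (auto simp: bas_def)
    ultimately show ?thesis by simp
  qed
qed

lemma ipD_bas:
  assumes "c \<in> DE r E" "j < r" "nE E j \<noteq> 0"
  shows "ipD r c (bas E j) = cnj (coef E j c) * nE E j"
proof -
  have "ipD r c (bas E j) = (\<Sum>ja<r. if ja = j then (\<Sum>l\<in>{l. length l = ja}. cnj (c ja l) * E ja l) else 0)"
    unfolding ipD_def bas_def by (rule sum.cong) auto
  also have "\<dots> = (\<Sum>l\<in>{l. length l = j}. cnj (c j l) * E j l)"
    using assms(2) by (simp add: sum.delta)
  also have "\<dots> = cnj (coef E j c) * nE E j"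
    unfolding nE_def coef_eq[OF assms] by (simp add: sum_distrib_left mult.assoc)
  finally show ?thesis .
qed

lemma adj_exists:
  assumes nz: "\<And>j. j < r \<Longrightarrow> nE E j \<noteq> 0"
    and maps: "\<And>a. a \<in> DE r E \<Longrightarrow> T a \<in> DE r E" and lin: "lin_on (DE r E) T"
    and a: "a \<in> DE r E"
  shows "\<exists>b\<in>DE r E. \<forall>c\<in>DE r E. ipD r (T c) a = ipD r c b"
proof -
  define b where "b = (\<lambda>i l. \<Sum>j<r. (ipD r (T (bas E j)) a / nE E j) * bas E j i l)"
  have bD: "b \<in> DE r E" unfolding b_def by (intro DE_sum DE_smult bas_in) auto
  have "ipD r (T c) a = ipD r c b" if c: "c \<in> DE r E" for c
  proof -
    have "T c = T (\<lambda>i l. \<Sum>j<r. (\<lambda>i l. coef E j c * bas E j i l) i l)"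
      using DE_decomp[OF c nz] by simp
    also have "\<dots> = (\<lambda>i l. \<Sum>j<r. T (\<lambda>i l. coef E j c * bas E j i l) i l)"
      by (rule lin_sum[OF lin]) (auto intro: DE_smult bas_in)
    also have "\<dots> = (\<lambda>i l. \<Sum>j<r. coef E j c * T (bas E j) i l)"
      by (intro ext sum.cong) (auto simp: lin_smultD[OF lin] bas_in)
    finally have Tc: "T c = (\<lambda>i l. \<Sum>j<r. coef E j c * T (bas E j) i l)" .
    have "ipD r (T c) a = (\<Sum>j<r. cnj (coef E j c) * ipD r (T (bas E j)) a)"
      unfolding Tc ipD_sum1 ipD_smult1 ..
    also have "\<dots> = (\<Sum>j<r. (ipD r (T (bas E j)) a / nE E j) * ipD r c (bas E j))"
      using nz ipD_bas[OF c _ nz] by (intro sum.cong) auto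
    also have "\<dots> = ipD r c b" unfolding b_def ipD_sum2 ipD_smult2 ..
    finally show ?thesis .
  qed
  thus ?thesis using bD by blast
qed

lemma DE_eqI:
  assumes supp: "\<And>j l. length l \<noteq> j \<Longrightarrow> E j l = 0"
    and "a \<in> DE r E" "b \<in> DE r E" "\<And>j l. j < r \<Longrightarrow> length l = j \<Longrightarrow> a j l = b j l"
  shows "a = b"
proof (intro ext)
  fix j l
  show "a j l = b j l"
  proof (cases "j < r")
    case True
    show ?thesis
    proof (cases "length l = j")
      case True thus ?thesis using assms(4) \<open>j < r\<close> by auto
    next
      case False
      obtain c1 c2 where "a j = (\<lambda>l. c1 * E j l)" "b j = (\<lambda>l. c2 * E j l)"
        using assms(2,3) \<open>j < r\<close> unfolding DE_def by blast
      thus ?thesis using supp[OF False] by simp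
    qed
  next
    case False thus ?thesis using assms(2,3) unfolding DE_def by auto
  qed
qed

lemma adj_unique:
  fixes E :: "nat \<Rightarrow> 'n::finite tensor"
  assumes supp: "\<And>j l. length l \<noteq> j \<Longrightarrow> E j l = 0"
    and "b1 \<in> DE r E" "b2 \<in> DE r E" "\<And>c. c \<in> DE r E \<Longrightarrow> ipD r c b1 = ipD r c b2"
  shows "b1 = b2"
proof -
  define d where "d = (\<lambda>j l. b1 j l - b2 j l)"
  have dD: "d \<in> DE r E" unfolding d_def using assms by (intro DE_diff)
  have "ipD r d d = 0" unfolding d_def[of] using assms(4)[OF dD]
    by (simp add: d_def[symmetric] ipD_diff2[of r d b1 b2, folded d_def])
  hence "d j l = 0" if "j < r" "length l = j" for j l using ipD_self_zero that by blast
  thus ?thesis using DE_eqI[OF supp assms(2,3)] unfolding d_def by simp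
qed

definition Ub :: "('a \<Rightarrow> complex^'n::finite^'n) \<Rightarrow> 'a \<Rightarrow> complex^'n" where
  "Ub P w = (SOME u. u \<noteq> 0 \<and> P w *v u = u \<and> (\<forall>v. P w *v v = v \<longrightarrow> (\<exists>c. v = c *s u)))"

definition Eb :: "('a \<Rightarrow> complex^'n::finite^'n) \<Rightarrow> ('a \<Rightarrow> 'a) \<Rightarrow> 'a \<Rightarrow> nat \<Rightarrow> 'n tensor" where
  "Eb P \<alpha> z = (\<lambda>j. tens (\<lambda>m. Ub P ((\<alpha> ^^ m) z)) j)"

definition good :: "'a set \<Rightarrow> ('a \<Rightarrow> 'a) \<Rightarrow> 'a \<Rightarrow> bool" where
  "good X \<alpha> z \<longleftrightarrow> (\<forall>m. (\<alpha> ^^ m) z \<in> X)"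

lemma Ub_prop:
  assumes "line_bundle_proj X P" "w \<in> X"
  shows "Ub P w \<noteq> 0 \<and> Ub P w \<in> fibre P w \<and> (\<forall>v\<in>fibre P w. \<exists>c. v = c *s Ub P w)"
proof -
  have "\<exists>u. u \<noteq> 0 \<and> P w *v u = u \<and> (\<forall>v. P w *v v = v \<longrightarrow> (\<exists>c. v = c *s u))"
    by (rule fibre_one_dim[OF assms])
  hence "Ub P w \<noteq> 0 \<and> P w *v Ub P w = Ub P w \<and> (\<forall>v. P w *v v = v \<longrightarrow> (\<exists>c. v = c *s Ub P w))"
    unfolding Ub_def by (rule someI_ex)
  thus ?thesis unfolding fibre_def by auto
qed

lemma good_shift: "good X \<alpha> z \<Longrightarrow> good X \<alpha> ((\<alpha> ^^ R) z)"
  unfolding good_def by (simp add: funpow_shift)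

lemma fibn_Eb:
  assumes lbp: "line_bundle_proj X P" and g: "good X \<alpha> z"
  shows "t \<in> fibn P \<alpha> j z \<longleftrightarrow> (\<exists>c. t = (\<lambda>l. c * Eb P \<alpha> z j l))"
proof
  assume "t \<in> fibn P \<alpha> j z"
  then obtain c vs where t: "t = (\<lambda>l. c * tens vs j l)" and vv: "\<forall>m<j. vs m \<in> fibre P ((\<alpha> ^^ m) z)"
    unfolding fibn_def by blast
  have "\<forall>m. \<exists>cm. m < j \<longrightarrow> vs m = cm *s Ub P ((\<alpha> ^^ m) z)"
    using vv Ub_prop[OF lbp] g unfolding good_def by blast
  then obtain cs where cs: "\<And>m. m < j \<Longrightarrow> vs m = cs m *s Ub P ((\<alpha> ^^ m) z)" by metis
  have "tens vs j = (\<lambda>l. (\<Prod>m<j. cs m) * tens (\<lambda>m. Ub P ((\<alpha> ^^ m) z)) j l)"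
    by (rule tens_scale) (rule cs)
  thus "\<exists>c. t = (\<lambda>l. c * Eb P \<alpha> z j l)"
    unfolding t Eb_def by (intro exI[of _ "c * (\<Prod>m<j. cs m)"]) (simp add: mult.assoc)
next
  assume "\<exists>c. t = (\<lambda>l. c * Eb P \<alpha> z j l)"
  then obtain c where "t = (\<lambda>l. c * Eb P \<alpha> z j l)" by blast
  moreover have "\<forall>m<j. Ub P ((\<alpha> ^^ m) z) \<in> fibre P ((\<alpha> ^^ m) z)"
    using Ub_prop[OF lbp] g unfolding good_def by blast
  ultimately show "t \<in> fibn P \<alpha> j z" unfolding fibn_def Eb_def by blast
qed

lemma Dsp_DE:
  assumes lbp: "line_bundle_proj X P" and g: "good X \<alpha> z"
  shows "Dsp P \<alpha> r z = DE r (Eb P \<alpha> z)"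
  unfolding Dsp_def DE_def using fibn_Eb[OF assms] by auto

lemma Eb_supp: "length l \<noteq> j \<Longrightarrow> Eb P \<alpha> z j l = 0"
  unfolding Eb_def by (rule tens_supp)

lemma tens_nz: "(\<And>m. m < n \<Longrightarrow> vs m \<noteq> 0) \<Longrightarrow> \<exists>l. length l = n \<and> tens vs n l \<noteq> 0"
proof (induction n)
  case 0 thus ?case by auto
next
  case (Suc n)
  then obtain l where l: "length l = n" "tens vs n l \<noteq> 0" by auto
  have "vs n \<noteq> 0" using Suc by auto
  then obtain i where "vs n $ i \<noteq> 0" by (metis vec_eq_iff zero_index)
  thus ?case using l by (intro exI[of _ "i # l"]) (simp add: vtens_def)
qed

lemma Eb_nz:
  assumes lbp: "line_bundle_proj X P" and g: "good X \<alpha> z"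
  shows "nE (Eb P \<alpha> z) j \<noteq> 0"
proof -
  have nz: "\<And>m. m < j \<Longrightarrow> Ub P ((\<alpha> ^^ m) z) \<noteq> 0" using Ub_prop[OF lbp] g unfolding good_def by blast
  obtain l where "length l = j" "Eb P \<alpha> z j l \<noteq> 0"
    using tens_nz[of j "\<lambda>m. Ub P ((\<alpha> ^^ m) z)", OF nz] unfolding Eb_def by blast
  thus ?thesis unfolding nE_def by (intro sum_cnj_nz) (auto simp: finite_len)
qed

lemma Dsp_iff: "a \<in> Dsp P \<alpha> r z \<longleftrightarrow> (\<forall>j<r. a j \<in> fibn P \<alpha> j z) \<and> (\<forall>j\<ge>r. a j = (\<lambda>_. 0))"
  unfolding Dsp_def by simp

lemma Dsp_supp: "a \<in> Dsp P \<alpha> r z \<Longrightarrow> (r \<le> j \<or> length l \<noteq> j) \<Longrightarrow> a j l = 0"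
proof -
  assume a: "a \<in> Dsp P \<alpha> r z" and h: "r \<le> j \<or> length l \<noteq> j"
  show ?thesis
  proof (cases "r \<le> j")
    case True thus ?thesis using a unfolding Dsp_iff by auto
  next
    case False
    hence "a j \<in> fibn P \<alpha> j z" using a unfolding Dsp_iff by auto
    moreover have "length l \<noteq> j" using h False by simp
    ultimately show ?thesis by (rule fibn_supp)
  qed
qed

context
  fixes X P \<alpha> z
  assumes lbp: "line_bundle_proj X P" and g: "good X \<alpha> z"
begin

lemma Dsp_zero: "(\<lambda>_ _. 0) \<in> Dsp P \<alpha> r z"
  unfolding Dsp_DE[OF lbp g] by (rule DE_zero)
lemma Dsp_add: "a \<in> Dsp P \<alpha> r z \<Longrightarrow> b \<in> Dsp P \<alpha> r z \<Longrightarrow> (\<lambda>j l. a j l + b j l) \<in> Dsp P \<alpha> r z"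
  unfolding Dsp_DE[OF lbp g] by (rule DE_add)
lemma Dsp_smult: "a \<in> Dsp P \<alpha> r z \<Longrightarrow> (\<lambda>j l. c * a j l) \<in> Dsp P \<alpha> r z"
  unfolding Dsp_DE[OF lbp g] by (rule DE_smult)
lemma Dsp_diff: "a \<in> Dsp P \<alpha> r z \<Longrightarrow> b \<in> Dsp P \<alpha> r z \<Longrightarrow> (\<lambda>j l. a j l - b j l) \<in> Dsp P \<alpha> r z"
  unfolding Dsp_DE[OF lbp g] by (rule DE_diff)
lemma Dsp_sum: "finite S \<Longrightarrow> (\<And>m. m \<in> S \<Longrightarrow> F m \<in> Dsp P \<alpha> r z) \<Longrightarrow> (\<lambda>j l. \<Sum>m\<in>S. F m j l) \<in> Dsp P \<alpha> r z"
  unfolding Dsp_DE[OF lbp g] by (rule DE_sum)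
lemma Dsp_lin_sum: "lin_on (Dsp P \<alpha> r z) T \<Longrightarrow> finite S \<Longrightarrow> (\<And>m. m \<in> S \<Longrightarrow> F m \<in> Dsp P \<alpha> r z) \<Longrightarrow>
    T (\<lambda>j l. \<Sum>m\<in>S. F m j l) = (\<lambda>j l. \<Sum>m\<in>S. T (F m) j l)"
  unfolding Dsp_DE[OF lbp g] by (rule lin_sum)

lemma Dsp_eqI:
  assumes "a \<in> Dsp P \<alpha> r z" "b \<in> Dsp P \<alpha> r z" "\<And>j l. j < r \<Longrightarrow> length l = j \<Longrightarrow> a j l = b j l"
  shows "a = b"
proof -
  have m: "a \<in> DE r (Eb P \<alpha> z)" "b \<in> DE r (Eb P \<alpha> z)" using assms(1,2) Dsp_DE[OF lbp g] by auto
  show ?thesis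
    apply (rule DE_eqI[of "Eb P \<alpha> z" a r b])
       apply (erule Eb_supp)
      apply (rule m(1))
     apply (rule m(2))
    apply (erule (1) assms(3))
    done
qed

lemma adjD_char:
  assumes maps: "\<And>a. a \<in> Dsp P \<alpha> r z \<Longrightarrow> T a \<in> Dsp P \<alpha> r z" and lin: "lin_on (Dsp P \<alpha> r z) T"
    and a: "a \<in> Dsp P \<alpha> r z"
  shows "adjD P \<alpha> r z T a \<in> Dsp P \<alpha> r z \<and> (\<forall>c\<in>Dsp P \<alpha> r z. ipD r (T c) a = ipD r c (adjD P \<alpha> r z T a))"
    and "b \<in> Dsp P \<alpha> r z \<Longrightarrow> (\<forall>c\<in>Dsp P \<alpha> r z. ipD r (T c) a = ipD r c b) \<Longrightarrow> adjD P \<alpha> r z T a = b"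
proof -
  let ?D = "Dsp P \<alpha> r z"
  have DD: "?D = DE r (Eb P \<alpha> z)" by (rule Dsp_DE[OF lbp g])
  have ex: "\<exists>b\<in>?D. \<forall>c\<in>?D. ipD r (T c) a = ipD r c b"
    unfolding DD by (rule adj_exists[OF Eb_nz[OF lbp g]]) (use maps lin a DD in auto)
  have uq: "b1 = b2" if "b1 \<in> ?D \<and> (\<forall>c\<in>?D. ipD r (T c) a = ipD r c b1)"
      "b2 \<in> ?D \<and> (\<forall>c\<in>?D. ipD r (T c) a = ipD r c b2)" for b1 b2
    using that unfolding DD by (intro adj_unique[OF Eb_supp]) auto
  have ex1: "\<exists>!b. b \<in> ?D \<and> (\<forall>c\<in>?D. ipD r (T c) a = ipD r c b)"
    using ex uq by blast
  show "adjD P \<alpha> r z T a \<in> ?D \<and> (\<forall>c\<in>?D. ipD r (T c) a = ipD r c (adjD P \<alpha> r z T a))"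
    unfolding adjD_def by (rule theI'[OF ex1])
  show "b \<in> ?D \<Longrightarrow> (\<forall>c\<in>?D. ipD r (T c) a = ipD r c b) \<Longrightarrow> adjD P \<alpha> r z T a = b"
    unfolding adjD_def by (rule the1_equality[OF ex1]) auto
qed

end

lemma inj_in_Dsp:
  assumes "b \<in> Dsp P \<alpha> rt ((\<alpha> ^^ R) x)" "c \<in> fibn P \<alpha> R x" "R + rt \<le> r"
  shows "inj_comp R rt b c \<in> Dsp P \<alpha> r x"
  unfolding Dsp_iff
proof (intro conjI allI impI)
  fix j assume "j < r"
  show "inj_comp R rt b c j \<in> fibn P \<alpha> j x"
  proof (cases "R \<le> j \<and> j < R + rt")
    case True
    hence "b (j - R) \<in> fibn P \<alpha> (j - R) ((\<alpha> ^^ R) x)" using assms(1) unfolding Dsp_iff by auto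
    hence "ttens R (b (j - R)) c \<in> fibn P \<alpha> (R + (j - R)) x" using assms(2) by (rule fibn_ttens)
    moreover have "R + (j - R) = j" using True by simp
    ultimately show ?thesis using True by (simp add: inj_comp_def)
  next
    case False thus ?thesis by (auto simp: inj_comp_def fibn_zero)
  qed
next
  fix j assume "r \<le> j" thus "inj_comp R rt b c j = (\<lambda>_. 0)" using assms(3) by (simp add: inj_comp_def)
qed

lemma inj_add: "inj_comp R r (\<lambda>j l. b1 j l + b2 j l) c = (\<lambda>j l. inj_comp R r b1 c j l + inj_comp R r b2 c j l)"
  by (auto simp: inj_comp_def ttens_add fun_eq_iff)

lemma inj_smult: "inj_comp R r (\<lambda>j l. a * b j l) c = (\<lambda>j l. a * inj_comp R r b c j l)"
  by (auto simp: inj_comp_def ttens_smult fun_eq_iff)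

lemma inj_diff: "inj_comp R r (\<lambda>j l. b1 j l - b2 j l) c = (\<lambda>j l. inj_comp R r b1 c j l - inj_comp R r b2 c j l)"
  by (auto simp: inj_comp_def ttens_diff fun_eq_iff)

lemma list_sum_split:
  fixes f g :: "'n::finite list \<Rightarrow> complex"
  shows
  "(\<Sum>l\<in>{l::'n::finite list. length l = i + R}. f (take i l) * g (drop i l))
   = (\<Sum>l1\<in>{l::'n list. length l = i}. f l1) * (\<Sum>l2\<in>{l::'n list. length l = R}. g l2)"
proof -
  have "(\<Sum>l1\<in>{l::'n list. length l = i}. f l1) * (\<Sum>l2\<in>{l::'n list. length l = R}. g l2)
      = (\<Sum>(l1,l2)\<in>{l::'n list. length l = i} \<times> {l::'n list. length l = R}. f l1 * g l2)"
    by (subst sum_product) (subst sum.cartesian_product, rule refl)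
  also have "\<dots> = (\<Sum>l\<in>{l::'n::finite list. length l = i + R}. f (take i l) * g (drop i l))"
    by (rule sum.reindex_bij_witness[of _ "\<lambda>l. (take i l, drop i l)" "\<lambda>(l1,l2). l1 @ l2"]) auto
  finally show ?thesis by simp
qed

definition ipT :: "nat \<Rightarrow> 'n::finite tensor \<Rightarrow> 'n tensor \<Rightarrow> complex" where
  "ipT R c1 c2 = (\<Sum>l\<in>{l. length l = R}. cnj (c1 l) * c2 l)"

lemma ipD_inj:
  fixes p q :: "'n::finite dvec"
  assumes "R + rt \<le> r"
  shows "ipD r (inj_comp R rt p c1) (inj_comp R rt q c2) = ipD rt p q * ipT R c1 c2"
proof -
  let ?g = "\<lambda>j. \<Sum>l\<in>{l. length l = j}. cnj (inj_comp R rt p c1 j l) * inj_comp R rt q c2 j l"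
  have "ipD r (inj_comp R rt p c1) (inj_comp R rt q c2) = (\<Sum>j<r. ?g j)" by (simp add: ipD_def)
  also have "\<dots> = (\<Sum>j\<in>{R..<R+rt}. ?g j)"
    using assms by (intro sum.mono_neutral_right) (auto simp: inj_comp_def)
  also have "\<dots> = (\<Sum>i\<in>{0..<rt}. ?g (i + R))"
    using sum.shift_bounds_nat_ivl[of ?g 0 R rt] by (simp add: add.commute)
  also have "\<dots> = (\<Sum>i<rt. (\<Sum>l1\<in>{l. length l = i}. cnj (p i l1) * q i l1) * ipT R c1 c2)"
  proof -
    have eq: "?g (i + R) = (\<Sum>l1\<in>{l. length l = i}. cnj (p i l1) * q i l1) * ipT R c1 c2" if "i < rt" for i
    proof -
      have "?g (i + R) = (\<Sum>l\<in>{l::'n list. length l = i + R}.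
          (cnj (p i (take i l)) * q i (take i l)) * (cnj (c1 (drop i l)) * c2 (drop i l)))"
        using that by (intro sum.cong) (auto simp: inj_comp_def ttens_def)
      also have "\<dots> = (\<Sum>l1\<in>{l. length l = i}. cnj (p i l1) * q i l1) * ipT R c1 c2"
        unfolding ipT_def by (rule list_sum_split)
      finally show ?thesis .
    qed
    show ?thesis using eq by (intro sum.cong) auto
  qed
  also have "\<dots> = ipD rt p q * ipT R c1 c2" by (simp add: ipD_def sum_distrib_right)
  finally show ?thesis .
qed

lemma ipD_inj_disj:
  assumes "R1 + r1 \<le> R2 \<or> R2 + r2 \<le> R1"
  shows "ipD r (inj_comp R1 r1 p c1) (inj_comp R2 r2 q c2) = 0"
  unfolding ipD_def using assms by (intro sum.neutral ballI) (auto simp: inj_comp_def)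

definition Rs :: "('a \<Rightarrow> 'a) \<Rightarrow> 'a set \<Rightarrow> nat list \<Rightarrow> nat \<Rightarrow> nat" where
  "Rs \<alpha> Y ts s = sum_list (map (rr \<alpha> Y) (take s ts))"

definition decomp :: "('a \<Rightarrow> 'a) \<Rightarrow> 'a set \<Rightarrow> nat \<Rightarrow> 'a \<Rightarrow> nat list \<Rightarrow> bool" where
  "decomp \<alpha> Y k x ts \<longleftrightarrow> (\<forall>t\<in>set ts. 1 \<le> t \<and> t < k) \<and> sum_list (map (rr \<alpha> Y) ts) = rr \<alpha> Y k \<and>
      (\<forall>s<length ts. (\<alpha> ^^ Rs \<alpha> Y ts s) x \<in> Yk \<alpha> Y (ts ! s))"

lemma bdp_iff: "bdp P \<alpha> Y \<sigma> \<longleftrightarrow> (\<forall>k x ts s b c. k \<in> {1..KK \<alpha> Y} \<longrightarrow> x \<in> closure (Yk \<alpha> Y k) - Yk \<alpha> Y k \<longrightarrow>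
   decomp \<alpha> Y k x ts \<longrightarrow> s < length ts \<longrightarrow>
   b \<in> Dsp P \<alpha> (rr \<alpha> Y (ts ! s)) ((\<alpha> ^^ Rs \<alpha> Y ts s) x) \<longrightarrow> c \<in> fibn P \<alpha> (Rs \<alpha> Y ts s) x \<longrightarrow>
   \<sigma> k x (inj_comp (Rs \<alpha> Y ts s) (rr \<alpha> Y (ts ! s)) b c)
     = inj_comp (Rs \<alpha> Y ts s) (rr \<alpha> Y (ts ! s)) (\<sigma> (ts ! s) ((\<alpha> ^^ Rs \<alpha> Y ts s) x) b) c)"
  unfolding bdp_def decomp_def Rs_def by blast

lemma Rs_Suc: "s < length ts \<Longrightarrow> Rs \<alpha> Y ts (Suc s) = Rs \<alpha> Y ts s + rr \<alpha> Y (ts ! s)"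
  unfolding Rs_def by (simp add: take_Suc_conv_app_nth)

lemma Rs_mono: "s \<le> s' \<Longrightarrow> Rs \<alpha> Y ts s \<le> Rs \<alpha> Y ts s'"
proof -
  assume "s \<le> s'"
  then obtain d where "s' = s + d" using le_Suc_ex by blast
  thus ?thesis unfolding Rs_def by (simp add: take_add)
qed

lemma Rs_len: "Rs \<alpha> Y ts (length ts) = sum_list (map (rr \<alpha> Y) ts)"
  unfolding Rs_def by simp

context
  fixes \<alpha> :: "'a::topological_space \<Rightarrow> 'a" and Y k x ts
  assumes dc: "decomp \<alpha> Y k x ts" and kK: "k \<in> {1..KK \<alpha> Y}"
begin

lemma dc_le: "s < length ts \<Longrightarrow> Rs \<alpha> Y ts s + rr \<alpha> Y (ts ! s) \<le> rr \<alpha> Y k"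
proof -
  assume s: "s < length ts"
  have "Rs \<alpha> Y ts s + rr \<alpha> Y (ts ! s) = Rs \<alpha> Y ts (Suc s)" using Rs_Suc[OF s, of \<alpha> Y] by simp
  also have "\<dots> \<le> Rs \<alpha> Y ts (length ts)" using s by (intro Rs_mono) simp
  also have "\<dots> = rr \<alpha> Y k" using dc unfolding decomp_def Rs_len by simp
  finally show ?thesis .
qed

lemma dc_last: "Suc s = length ts \<Longrightarrow> Rs \<alpha> Y ts s + rr \<alpha> Y (ts ! s) = rr \<alpha> Y k"
proof -
  assume s: "Suc s = length ts"
  have "Rs \<alpha> Y ts s + rr \<alpha> Y (ts ! s) = Rs \<alpha> Y ts (length ts)" using Rs_Suc[of s ts \<alpha> Y] s by simp
  also have "\<dots> = rr \<alpha> Y k" using dc unfolding decomp_def Rs_len by simp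
  finally show ?thesis .
qed

lemma dc_next: "Suc s < length ts \<Longrightarrow> (\<alpha> ^^ (Rs \<alpha> Y ts s + rr \<alpha> Y (ts ! s))) x \<in> Y"
proof -
  assume s: "Suc s < length ts"
  have "(\<alpha> ^^ Rs \<alpha> Y ts (Suc s)) x \<in> Yk \<alpha> Y (ts ! Suc s)" using dc s unfolding decomp_def by blast
  thus ?thesis using Rs_Suc[of s ts \<alpha> Y] s unfolding Yk_def by simp
qed

lemma dc_t: "s < length ts \<Longrightarrow> ts ! s \<in> {1..KK \<alpha> Y}"
proof -
  assume s: "s < length ts"
  hence "ts ! s \<in> set ts" by simp
  thus ?thesis using dc kK unfolding decomp_def by fastforce
qed

lemma dc_y: "s < length ts \<Longrightarrow> (\<alpha> ^^ Rs \<alpha> Y ts s) x \<in> closure (Yk \<alpha> Y (ts ! s))"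
  using dc unfolding decomp_def by (meson closure_subset subsetD)

lemma dc_cover: "j < rr \<alpha> Y k \<Longrightarrow> \<exists>s<length ts. Rs \<alpha> Y ts s \<le> j \<and> j < Rs \<alpha> Y ts s + rr \<alpha> Y (ts ! s)"
proof -
  have "\<forall>j < Rs \<alpha> Y ts n. \<exists>s<n. Rs \<alpha> Y ts s \<le> j \<and> j < Rs \<alpha> Y ts s + rr \<alpha> Y (ts ! s)" if "n \<le> length ts" for n
    using that
  proof (induction n)
    case 0 thus ?case by (simp add: Rs_def)
  next
    case (Suc n)
    show ?case
    proof (intro allI impI)
      fix j assume j: "j < Rs \<alpha> Y ts (Suc n)"
      show "\<exists>s<Suc n. Rs \<alpha> Y ts s \<le> j \<and> j < Rs \<alpha> Y ts s + rr \<alpha> Y (ts ! s)"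
      proof (cases "j < Rs \<alpha> Y ts n")
        case True thus ?thesis using Suc by (meson Suc_leD less_SucI)
      next
        case False
        thus ?thesis using j Rs_Suc[of n ts \<alpha> Y] Suc.prems by (intro exI[of _ n]) auto
      qed
    qed
  qed
  moreover have "Rs \<alpha> Y ts (length ts) = rr \<alpha> Y k" using dc unfolding decomp_def Rs_len by simp
  ultimately show "j < rr \<alpha> Y k \<Longrightarrow> ?thesis" by auto
qed

lemma dc_disj: "s < length ts \<Longrightarrow> s' < length ts \<Longrightarrow> s \<noteq> s' \<Longrightarrow>
   Rs \<alpha> Y ts s + rr \<alpha> Y (ts ! s) \<le> Rs \<alpha> Y ts s' \<or> Rs \<alpha> Y ts s' + rr \<alpha> Y (ts ! s') \<le> Rs \<alpha> Y ts s"
proof -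
  assume a: "s < length ts" "s' < length ts" "s \<noteq> s'"
  show ?thesis
  proof (cases "s < s'")
    case True
    hence "Rs \<alpha> Y ts (Suc s) \<le> Rs \<alpha> Y ts s'" by (intro Rs_mono) simp
    thus ?thesis using Rs_Suc[of s ts \<alpha> Y] a by simp
  next
    case False
    hence "Rs \<alpha> Y ts (Suc s') \<le> Rs \<alpha> Y ts s" using a by (intro Rs_mono) simp
    thus ?thesis using Rs_Suc[of s' ts \<alpha> Y] a by simp
  qed
qed

end

definition Inv :: "('a::topological_space \<Rightarrow> complex^'n::finite^'n) \<Rightarrow> ('a \<Rightarrow> 'a) \<Rightarrow> 'a set \<Rightarrow> ('a, 'n) fam \<Rightarrow> bool" where
  "Inv P \<alpha> Y \<sigma> \<longleftrightarrow> (\<forall>k\<in>{1..KK \<alpha> Y}. \<forall>x\<in>closure (Yk \<alpha> Y k).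
     (\<forall>a\<in>Dsp P \<alpha> (rr \<alpha> Y k) x. \<sigma> k x a \<in> Dsp P \<alpha> (rr \<alpha> Y k) x) \<and> lin_on (Dsp P \<alpha> (rr \<alpha> Y k) x) (\<sigma> k x))"

lemma InvD1: "Inv P \<alpha> Y \<sigma> \<Longrightarrow> k \<in> {1..KK \<alpha> Y} \<Longrightarrow> x \<in> closure (Yk \<alpha> Y k) \<Longrightarrow>
   a \<in> Dsp P \<alpha> (rr \<alpha> Y k) x \<Longrightarrow> \<sigma> k x a \<in> Dsp P \<alpha> (rr \<alpha> Y k) x"
  unfolding Inv_def by blast

lemma InvD2: "Inv P \<alpha> Y \<sigma> \<Longrightarrow> k \<in> {1..KK \<alpha> Y} \<Longrightarrow> x \<in> closure (Yk \<alpha> Y k) \<Longrightarrow>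
   lin_on (Dsp P \<alpha> (rr \<alpha> Y k) x) (\<sigma> k x)"
  unfolding Inv_def by blast

lemma InvI: "(\<And>k x. k \<in> {1..KK \<alpha> Y} \<Longrightarrow> x \<in> closure (Yk \<alpha> Y k) \<Longrightarrow>
     (\<forall>a\<in>Dsp P \<alpha> (rr \<alpha> Y k) x. \<sigma> k x a \<in> Dsp P \<alpha> (rr \<alpha> Y k) x) \<and> lin_on (Dsp P \<alpha> (rr \<alpha> Y k) x) (\<sigma> k x))
   \<Longrightarrow> Inv P \<alpha> Y \<sigma>"
  unfolding Inv_def by blast

context
  fixes X :: "'a::metric_space set" and P :: "'a \<Rightarrow> complex^'n::finite^'n" and \<alpha> :: "'a \<Rightarrow> 'a" and Y :: "'a set"
  assumes lbp: "line_bundle_proj X P" and aX: "\<And>z. z \<in> X \<Longrightarrow> \<alpha> z \<in> X"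
    and clX: "\<And>k. closure (Yk \<alpha> Y k) \<subseteq> X"
begin

lemma goodX: "z \<in> X \<Longrightarrow> good X \<alpha> z"
proof -
  assume z: "z \<in> X"
  have "(\<alpha> ^^ m) z \<in> X" for m by (induction m) (use z aX in auto)
  thus ?thesis unfolding good_def by blast
qed

lemma good_cl: "x \<in> closure (Yk \<alpha> Y k) \<Longrightarrow> good X \<alpha> x"
  using clX goodX by blast

lemma caseC: "Inv P \<alpha> Y (piC \<alpha> Y f) \<and> bdp P \<alpha> Y (piC \<alpha> Y f)"
proof
  show "Inv P \<alpha> Y (piC \<alpha> Y f)"
  proof (rule InvI, intro conjI ballI)
    fix k x a assume "a \<in> Dsp P \<alpha> (rr \<alpha> Y k) x"
    thus "piC \<alpha> Y f k x a \<in> Dsp P \<alpha> (rr \<alpha> Y k) x"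
      unfolding Dsp_iff piC_def by (auto intro: fibn_smult)
  next
    fix k x
    show "lin_on (Dsp P \<alpha> (rr \<alpha> Y k) x) (piC \<alpha> Y f k x)"
      unfolding lin_on_def piC_def by (auto simp: fun_eq_iff algebra_simps)
  qed
next
  show "bdp P \<alpha> Y (piC \<alpha> Y f)"
    unfolding bdp_iff
  proof (intro allI impI)
    fix k x ts s b c
    assume kK: "k \<in> {1..KK \<alpha> Y}" and x: "x \<in> closure (Yk \<alpha> Y k) - Yk \<alpha> Y k" and dc: "decomp \<alpha> Y k x ts"
      and s: "s < length ts"
    define R where "R = Rs \<alpha> Y ts s"
    define rt where "rt = rr \<alpha> Y (ts ! s)"
    have le: "R + rt \<le> rr \<alpha> Y k" unfolding R_def rt_def by (rule dc_le[OF dc kK s])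
    show "piC \<alpha> Y f k x (inj_comp (Rs \<alpha> Y ts s) (rr \<alpha> Y (ts ! s)) b c) =
       inj_comp (Rs \<alpha> Y ts s) (rr \<alpha> Y (ts ! s)) (piC \<alpha> Y f (ts ! s) ((\<alpha> ^^ Rs \<alpha> Y ts s) x) b) c"
      unfolding R_def[symmetric] rt_def[symmetric]
    proof (intro ext)
      fix j l
      show "piC \<alpha> Y f k x (inj_comp R rt b c) j l = inj_comp R rt (piC \<alpha> Y f (ts ! s) ((\<alpha> ^^ R) x) b) c j l"
      proof (cases "R \<le> j \<and> j < R + rt")
        case True
        hence e: "j - R + R = j" "j < rr \<alpha> Y k" "j - R < rt" using le by auto
        show ?thesis using True e unfolding piC_def inj_comp_def rt_def[symmetric]
          by (simp add: ttens_smult funpow_shift)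
      next
        case False thus ?thesis unfolding piC_def inj_comp_def by auto
      qed
    qed
  qed
qed

lemma caseE:
  assumes xi: "\<xi> \<in> EY X P \<alpha> Y"
  shows "Inv P \<alpha> Y (piE \<alpha> Y \<xi>) \<and> bdp P \<alpha> Y (piE \<alpha> Y \<xi>)"
proof -
  obtain f \<xi>0 where xe: "\<xi> = (\<lambda>x. f (\<alpha> x) *s \<xi>0 x)" and fY: "\<forall>y\<in>Y. f y = 0" and s0: "\<xi>0 \<in> sections X P"
    using xi unfolding EY_def by blast
  have xf: "\<xi> z \<in> fibre P z" if "z \<in> X" for z
    using s0 that unfolding xe sections_def by (auto intro: fibre_smult)
  have gX: "(\<alpha> ^^ m) x \<in> X" if "x \<in> closure (Yk \<alpha> Y k)" for x k m
    using good_cl[OF that] unfolding good_def by blast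
  show ?thesis
  proof
    show "Inv P \<alpha> Y (piE \<alpha> Y \<xi>)"
    proof (rule InvI, intro conjI ballI)
      fix k x a assume x: "x \<in> closure (Yk \<alpha> Y k)" and a: "a \<in> Dsp P \<alpha> (rr \<alpha> Y k) x"
      show "piE \<alpha> Y \<xi> k x a \<in> Dsp P \<alpha> (rr \<alpha> Y k) x"
        unfolding Dsp_iff
      proof (intro conjI allI impI)
        fix j assume j: "j < rr \<alpha> Y k"
        show "piE \<alpha> Y \<xi> k x a j \<in> fibn P \<alpha> j x"
        proof (cases "0 < j")
          case True
          have "a (j - 1) \<in> fibn P \<alpha> (j - 1) x" using a j unfolding Dsp_iff by auto
          moreover have "\<xi> ((\<alpha> ^^ (j - 1)) x) \<in> fibre P ((\<alpha> ^^ (j - 1)) x)" using xf gX[OF x] by blast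
          ultimately have "vtens (\<xi> ((\<alpha> ^^ (j - 1)) x)) (a (j - 1)) \<in> fibn P \<alpha> (Suc (j - 1)) x"
            by (rule fibn_vtens)
          thus ?thesis using True j unfolding piE_def by simp
        next
          case False thus ?thesis unfolding piE_def by (simp add: fibn_zero)
        qed
      next
        fix j assume "rr \<alpha> Y k \<le> j" thus "piE \<alpha> Y \<xi> k x a j = (\<lambda>_. 0)" unfolding piE_def by simp
      qed
    next
      fix k x
      show "lin_on (Dsp P \<alpha> (rr \<alpha> Y k) x) (piE \<alpha> Y \<xi> k x)"
        unfolding lin_on_def piE_def by (auto simp: fun_eq_iff vtens_add vtens_scale2)
    qed
  next
    show "bdp P \<alpha> Y (piE \<alpha> Y \<xi>)"
      unfolding bdp_iff
    proof (intro allI impI)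
      fix k x ts s b c
      assume kK: "k \<in> {1..KK \<alpha> Y}" and x: "x \<in> closure (Yk \<alpha> Y k) - Yk \<alpha> Y k" and dc: "decomp \<alpha> Y k x ts"
        and s: "s < length ts"
      define R where "R = Rs \<alpha> Y ts s"
      define rt where "rt = rr \<alpha> Y (ts ! s)"
      define r where "r = rr \<alpha> Y k"
      have le: "R + rt \<le> r" unfolding R_def rt_def r_def by (rule dc_le[OF dc kK s])
      show "piE \<alpha> Y \<xi> k x (inj_comp (Rs \<alpha> Y ts s) (rr \<alpha> Y (ts ! s)) b c) =
         inj_comp (Rs \<alpha> Y ts s) (rr \<alpha> Y (ts ! s)) (piE \<alpha> Y \<xi> (ts ! s) ((\<alpha> ^^ Rs \<alpha> Y ts s) x) b) c"
        unfolding R_def[symmetric] rt_def[symmetric]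
      proof (intro ext)
        fix j l
        have pk: "piE \<alpha> Y \<xi> k x a j = (if 0 < j \<and> j < r then vtens (\<xi> ((\<alpha> ^^ (j - 1)) x)) (a (j - 1)) else (\<lambda>_. 0))" for a j
          unfolding piE_def r_def by simp
        have pt: "piE \<alpha> Y \<xi> (ts ! s) y a j = (if 0 < j \<and> j < rt then vtens (\<xi> ((\<alpha> ^^ (j - 1)) y)) (a (j - 1)) else (\<lambda>_. 0))" for a j y
          unfolding piE_def rt_def by simp
        have ij: "inj_comp R rt a c j = (if R \<le> j \<and> j < R + rt then ttens R (a (j - R)) c else (\<lambda>_. 0))" for a j
          unfolding inj_comp_def by simp
        consider (A) "j = 0 \<or> r \<le> j" | (B) "0 < j \<and> j < r \<and> j \<le> R" | (C) "R < j \<and> j < R + rt"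
          | (D) "j = R + rt \<and> 0 < rt \<and> j < r" | (E) "R + rt < j \<and> j < r" using le by linarith
        thus "piE \<alpha> Y \<xi> k x (inj_comp R rt b c) j l = inj_comp R rt (piE \<alpha> Y \<xi> (ts ! s) ((\<alpha> ^^ R) x) b) c j l"
        proof cases
          case A thus ?thesis using le by (auto simp: pk pt ij ttens_zero)
        next
          case B thus ?thesis by (auto simp: pk pt ij ttens_zero vtens_zero)
        next
          case C
          have e1: "j - R - 1 + R = j - 1" "j - 1 - R = j - R - 1" "0 < j" "j < r" "R \<le> j - 1" "j - 1 < R + rt"
            "0 < j - R" "j - R < rt" using C le by auto
          have e3: "j - Suc R + R = j - Suc 0" using C by auto
          have e2: "(\<alpha> ^^ (j - Suc R)) ((\<alpha> ^^ R) x) = (\<alpha> ^^ (j - Suc 0)) x"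
            by (simp only: funpow_shift e3)
          show ?thesis using C e1 by (simp add: pk pt ij e2 vtens_ttens)
        next
          case D
          have ns: "Suc s < length ts"
          proof (rule ccontr)
            assume "\<not> Suc s < length ts"
            hence "Suc s = length ts" using s by simp
            hence "R + rt = r" unfolding R_def rt_def r_def by (rule dc_last[OF dc kK])
            thus False using D by simp
          qed
          have inY: "(\<alpha> ^^ j) x \<in> Y" using dc_next[OF dc kK ns] D unfolding R_def rt_def by simp
          have "\<alpha> ((\<alpha> ^^ (j - 1)) x) = (\<alpha> ^^ j) x"
          proof -
            have "Suc (j - 1) = j" using D by simp
            hence "(\<alpha> ^^ j) x = (\<alpha> ^^ Suc (j - 1)) x" by simp
            thus ?thesis by simp
          qed
          hence z: "\<xi> ((\<alpha> ^^ (j - 1)) x) = 0" using fY inY unfolding xe by simp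
          have "vtens (0::complex^'n) t = (\<lambda>_. 0)" for t
            using vtens_scale[of 0 0 t] by simp
          moreover have z': "\<xi> ((\<alpha> ^^ (R + rt - Suc 0)) x) = 0" using z D by simp
          ultimately show ?thesis using D by (simp add: pk ij z')
        next
          case E thus ?thesis by (auto simp: pk pt ij vtens_zero)
        qed
      qed
    qed
  qed
qed

lemma caseAdd:
  assumes IH1: "Inv P \<alpha> Y \<sigma>" "bdp P \<alpha> Y \<sigma>" and IH2: "Inv P \<alpha> Y \<tau>" "bdp P \<alpha> Y \<tau>"
  shows "Inv P \<alpha> Y (\<lambda>k x a j l. \<sigma> k x a j l + \<tau> k x a j l) \<and> bdp P \<alpha> Y (\<lambda>k x a j l. \<sigma> k x a j l + \<tau> k x a j l)"
proof
  show "Inv P \<alpha> Y (\<lambda>k x a j l. \<sigma> k x a j l + \<tau> k x a j l)"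
  proof (rule InvI, intro conjI ballI)
    fix k x a assume kK: "k \<in> {1..KK \<alpha> Y}" and x: "x \<in> closure (Yk \<alpha> Y k)" and a: "a \<in> Dsp P \<alpha> (rr \<alpha> Y k) x"
    show "(\<lambda>j l. \<sigma> k x a j l + \<tau> k x a j l) \<in> Dsp P \<alpha> (rr \<alpha> Y k) x"
      by (rule Dsp_add[OF lbp good_cl[OF x]] InvD1[OF IH1(1) kK x a] InvD1[OF IH2(1) kK x a])+
  next
    fix k x assume kK: "k \<in> {1..KK \<alpha> Y}" and x: "x \<in> closure (Yk \<alpha> Y k)"
    note l1 = InvD2[OF IH1(1) kK x] and l2 = InvD2[OF IH2(1) kK x]
    show "lin_on (Dsp P \<alpha> (rr \<alpha> Y k) x) (\<lambda>a j l. \<sigma> k x a j l + \<tau> k x a j l)"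
      unfolding lin_on_def
      by (auto simp: lin_addD[OF l1] lin_addD[OF l2] lin_smultD[OF l1] lin_smultD[OF l2] algebra_simps)
  qed
next
  show "bdp P \<alpha> Y (\<lambda>k x a j l. \<sigma> k x a j l + \<tau> k x a j l)"
    using IH1(2) IH2(2) unfolding bdp_iff by (simp add: inj_add)
qed

lemma caseSmult:
  assumes IH1: "Inv P \<alpha> Y \<sigma>" "bdp P \<alpha> Y \<sigma>"
  shows "Inv P \<alpha> Y (\<lambda>k x a j l. cc * \<sigma> k x a j l) \<and> bdp P \<alpha> Y (\<lambda>k x a j l. cc * \<sigma> k x a j l)"
proof
  show "Inv P \<alpha> Y (\<lambda>k x a j l. cc * \<sigma> k x a j l)"
  proof (rule InvI, intro conjI ballI)
    fix k x a assume kK: "k \<in> {1..KK \<alpha> Y}" and x: "x \<in> closure (Yk \<alpha> Y k)" and a: "a \<in> Dsp P \<alpha> (rr \<alpha> Y k) x"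
    show "(\<lambda>j l. cc * \<sigma> k x a j l) \<in> Dsp P \<alpha> (rr \<alpha> Y k) x"
      by (rule Dsp_smult[OF lbp good_cl[OF x]] InvD1[OF IH1(1) kK x a])+
  next
    fix k x assume kK: "k \<in> {1..KK \<alpha> Y}" and x: "x \<in> closure (Yk \<alpha> Y k)"
    note l1 = InvD2[OF IH1(1) kK x]
    show "lin_on (Dsp P \<alpha> (rr \<alpha> Y k) x) (\<lambda>a j l. cc * \<sigma> k x a j l)"
      unfolding lin_on_def
      by (auto simp: lin_addD[OF l1] lin_smultD[OF l1] algebra_simps)
  qed
next
  show "bdp P \<alpha> Y (\<lambda>k x a j l. cc * \<sigma> k x a j l)"
    using IH1(2) unfolding bdp_iff by (simp add: inj_smult)
qed

lemma caseComp:
  assumes IH1: "Inv P \<alpha> Y \<sigma>" "bdp P \<alpha> Y \<sigma>" and IH2: "Inv P \<alpha> Y \<tau>" "bdp P \<alpha> Y \<tau>"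
  shows "Inv P \<alpha> Y (\<lambda>k x. \<sigma> k x \<circ> \<tau> k x) \<and> bdp P \<alpha> Y (\<lambda>k x. \<sigma> k x \<circ> \<tau> k x)"
proof
  show "Inv P \<alpha> Y (\<lambda>k x. \<sigma> k x \<circ> \<tau> k x)"
  proof (rule InvI, intro conjI ballI)
    fix k x a assume kK: "k \<in> {1..KK \<alpha> Y}" and x: "x \<in> closure (Yk \<alpha> Y k)" and a: "a \<in> Dsp P \<alpha> (rr \<alpha> Y k) x"
    show "(\<sigma> k x \<circ> \<tau> k x) a \<in> Dsp P \<alpha> (rr \<alpha> Y k) x"
      unfolding comp_def by (rule InvD1[OF IH1(1) kK x InvD1[OF IH2(1) kK x a]])
  next
    fix k x assume kK: "k \<in> {1..KK \<alpha> Y}" and x: "x \<in> closure (Yk \<alpha> Y k)"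
    note l1 = InvD2[OF IH1(1) kK x] and l2 = InvD2[OF IH2(1) kK x]
    note m2 = InvD1[OF IH2(1) kK x]
    show "lin_on (Dsp P \<alpha> (rr \<alpha> Y k) x) (\<sigma> k x \<circ> \<tau> k x)"
      unfolding lin_on_def comp_def
      by (auto simp: lin_addD[OF l2] lin_smultD[OF l2] lin_addD[OF l1 m2 m2] lin_smultD[OF l1 m2])
  qed
next
  show "bdp P \<alpha> Y (\<lambda>k x. \<sigma> k x \<circ> \<tau> k x)"
    unfolding bdp_iff
  proof (intro allI impI)
    fix k x ts s b c
    assume kK: "k \<in> {1..KK \<alpha> Y}" and x: "x \<in> closure (Yk \<alpha> Y k) - Yk \<alpha> Y k" and dc: "decomp \<alpha> Y k x ts"
      and s: "s < length ts" and b: "b \<in> Dsp P \<alpha> (rr \<alpha> Y (ts ! s)) ((\<alpha> ^^ Rs \<alpha> Y ts s) x)"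
      and c: "c \<in> fibn P \<alpha> (Rs \<alpha> Y ts s) x"
    have tb: "\<tau> (ts ! s) ((\<alpha> ^^ Rs \<alpha> Y ts s) x) b \<in> Dsp P \<alpha> (rr \<alpha> Y (ts ! s)) ((\<alpha> ^^ Rs \<alpha> Y ts s) x)"
      by (rule InvD1[OF IH2(1) dc_t[OF dc kK s] dc_y[OF dc kK s] b])
    have "\<tau> k x (inj_comp (Rs \<alpha> Y ts s) (rr \<alpha> Y (ts ! s)) b c)
        = inj_comp (Rs \<alpha> Y ts s) (rr \<alpha> Y (ts ! s)) (\<tau> (ts ! s) ((\<alpha> ^^ Rs \<alpha> Y ts s) x) b) c"
      using IH2(2) kK x dc s b c unfolding bdp_iff by blast
    moreover have "\<sigma> k x (inj_comp (Rs \<alpha> Y ts s) (rr \<alpha> Y (ts ! s)) (\<tau> (ts ! s) ((\<alpha> ^^ Rs \<alpha> Y ts s) x) b) c)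
        = inj_comp (Rs \<alpha> Y ts s) (rr \<alpha> Y (ts ! s)) (\<sigma> (ts ! s) ((\<alpha> ^^ Rs \<alpha> Y ts s) x) (\<tau> (ts ! s) ((\<alpha> ^^ Rs \<alpha> Y ts s) x) b)) c"
      using IH1(2) kK x dc s tb c unfolding bdp_iff by blast
    ultimately show "(\<sigma> k x \<circ> \<tau> k x) (inj_comp (Rs \<alpha> Y ts s) (rr \<alpha> Y (ts ! s)) b c) =
       inj_comp (Rs \<alpha> Y ts s) (rr \<alpha> Y (ts ! s)) ((\<sigma> (ts ! s) ((\<alpha> ^^ Rs \<alpha> Y ts s) x) \<circ> \<tau> (ts ! s) ((\<alpha> ^^ Rs \<alpha> Y ts s) x)) b) c"
      by simp
  qed
qed

end

lemma small_zero:
  fixes z :: complex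
  assumes h: "\<And>e. e > 0 \<Longrightarrow> cmod z \<le> e * K" and K: "0 \<le> K"
  shows "z = 0"
proof (rule ccontr)
  assume "z \<noteq> 0"
  hence p: "cmod z > 0" by simp
  define e where "e = cmod z / (2 * (K + 1))"
  have ep: "e > 0" unfolding e_def using p K by simp
  have "cmod z \<le> e * K" by (rule h[OF ep])
  hence "cmod z * (2 * (K + 1)) \<le> cmod z * K" unfolding e_def using K by (simp add: field_simps)
  hence "cmod z * (K + 2) \<le> 0" by (simp add: algebra_simps)
  moreover have "cmod z * (K + 2) > 0" using p K by simp
  ultimately show False by simp
qed

lemma delta_split:
  assumes v: "v \<in> fibn P \<alpha> j x" and j: "R' \<le> j" "j < R' + r'"
  shows "\<exists>bw cc. bw \<in> Dsp P \<alpha> r' ((\<alpha> ^^ R') x) \<and> cc \<in> fibn P \<alpha> R' x \<and>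
     (\<lambda>i0. if i0 = j then v else (\<lambda>_. 0)) = inj_comp R' r' bw cc"
proof -
  obtain c0 vs where ve: "v = (\<lambda>l. c0 * tens vs j l)" and vs: "\<forall>m<j. vs m \<in> fibre P ((\<alpha> ^^ m) x)"
    using v unfolding fibn_def by blast
  define i where "i = j - R'"
  have ji: "j = R' + i" "i < r'" using j unfolding i_def by auto
  define w where "w = (\<lambda>l. c0 * tens (\<lambda>m. vs (m + R')) i l)"
  define cc where "cc = tens vs R'"
  define bw where "bw = (\<lambda>i'. if i' = i then w else (\<lambda>_::'a list. 0::complex))"
  have wf: "w \<in> fibn P \<alpha> i ((\<alpha> ^^ R') x)"
  proof -
    have "\<forall>m<i. vs (m + R') \<in> fibre P ((\<alpha> ^^ m) ((\<alpha> ^^ R') x))"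
      using vs ji by (auto simp: funpow_shift)
    thus ?thesis unfolding fibn_def w_def by blast
  qed
  have ccf: "cc \<in> fibn P \<alpha> R' x"
  proof -
    have "\<forall>m<R'. vs m \<in> fibre P ((\<alpha> ^^ m) x)" using vs j by auto
    hence "(\<lambda>l. 1 * tens vs R' l) \<in> fibn P \<alpha> R' x" unfolding fibn_def by blast
    thus ?thesis unfolding cc_def by simp
  qed
  have bwD: "bw \<in> Dsp P \<alpha> r' ((\<alpha> ^^ R') x)"
    unfolding Dsp_iff bw_def using wf ji by (auto simp: fibn_zero)
  have "(\<lambda>i0. if i0 = j then v else (\<lambda>_. 0)) = inj_comp R' r' bw cc"
  proof (intro ext)
    fix i0 l
    show "(if i0 = j then v else (\<lambda>_. 0)) l = inj_comp R' r' bw cc i0 l"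
    proof (cases "i0 = j")
      case True
      have "ttens R' w cc = (\<lambda>l. c0 * tens vs (R' + i) l)"
        unfolding w_def cc_def tens_split ttens_smult ..
      thus ?thesis using True ji unfolding inj_comp_def bw_def ve by simp
    next
      case False
      hence "i0 - R' \<noteq> i \<or> \<not> (R' \<le> i0)" using ji by auto
      thus ?thesis using False unfolding inj_comp_def bw_def by (auto simp: ttens_zero)
    qed
  qed
  thus ?thesis using bwD ccf by blast
qed

context
  fixes X :: "'a::metric_space set" and P :: "'a \<Rightarrow> complex^'n::finite^'n" and \<alpha> :: "'a \<Rightarrow> 'a" and Y :: "'a set"
  assumes lbp: "line_bundle_proj X P" and aX: "\<And>z. z \<in> X \<Longrightarrow> \<alpha> z \<in> X"
    and clX: "\<And>k. closure (Yk \<alpha> Y k) \<subseteq> X"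
begin

lemma adjC1:
  assumes "good X \<alpha> z" "\<forall>a\<in>Dsp P \<alpha> r z. T a \<in> Dsp P \<alpha> r z" "lin_on (Dsp P \<alpha> r z) T" "a \<in> Dsp P \<alpha> r z"
  shows "adjD P \<alpha> r z T a \<in> Dsp P \<alpha> r z \<and> (\<forall>c\<in>Dsp P \<alpha> r z. ipD r (T c) a = ipD r c (adjD P \<alpha> r z T a))"
  by (rule adjD_char(1)[OF lbp assms(1) _ assms(3,4)]) (use assms(2) in blast)

lemma adjC2:
  assumes "good X \<alpha> z" "\<forall>a\<in>Dsp P \<alpha> r z. T a \<in> Dsp P \<alpha> r z" "lin_on (Dsp P \<alpha> r z) T" "a \<in> Dsp P \<alpha> r z"
    "b \<in> Dsp P \<alpha> r z" "\<forall>c\<in>Dsp P \<alpha> r z. ipD r (T c) a = ipD r c b"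
  shows "adjD P \<alpha> r z T a = b"
  by (rule adjD_char(2)[OF lbp assms(1) _ assms(3,4,5,6)]) (use assms(2) in blast)

lemma gcl: "x \<in> closure (Yk \<alpha> Y k) \<Longrightarrow> good X \<alpha> x"
  by (rule good_cl[OF lbp aX clX])

lemma caseAdj:
  assumes IH: "Inv P \<alpha> Y \<sigma>" "bdp P \<alpha> Y \<sigma>"
  shows "Inv P \<alpha> Y (\<lambda>k x. adjD P \<alpha> (rr \<alpha> Y k) x (\<sigma> k x)) \<and> bdp P \<alpha> Y (\<lambda>k x. adjD P \<alpha> (rr \<alpha> Y k) x (\<sigma> k x))"
proof
  show "Inv P \<alpha> Y (\<lambda>k x. adjD P \<alpha> (rr \<alpha> Y k) x (\<sigma> k x))"
  proof (rule InvI)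
    fix k x assume kK: "k \<in> {1..KK \<alpha> Y}" and x: "x \<in> closure (Yk \<alpha> Y k)"
    let ?D = "Dsp P \<alpha> (rr \<alpha> Y k) x" and ?A = "adjD P \<alpha> (rr \<alpha> Y k) x (\<sigma> k x)"
    note g = gcl[OF x]
    have m: "\<forall>a\<in>?D. \<sigma> k x a \<in> ?D" using InvD1[OF IH(1) kK x] by blast
    note l = InvD2[OF IH(1) kK x]
    note ch1 = adjC1[OF g m l] and ch2 = adjC2[OF g m l]
    have maps: "\<forall>a\<in>?D. ?A a \<in> ?D" using ch1 by blast
    have add: "?A (\<lambda>j l. a j l + b j l) = (\<lambda>j l. ?A a j l + ?A b j l)" if a: "a \<in> ?D" and b: "b \<in> ?D" for a b
    proof (rule ch2)
      show "(\<lambda>j l. a j l + b j l) \<in> ?D" by (rule Dsp_add[OF lbp g a b])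
      show "(\<lambda>j l. ?A a j l + ?A b j l) \<in> ?D" using ch1[OF a] ch1[OF b] by (intro Dsp_add[OF lbp g]) auto
      show "\<forall>c\<in>?D. ipD (rr \<alpha> Y k) (\<sigma> k x c) (\<lambda>j l. a j l + b j l) = ipD (rr \<alpha> Y k) c (\<lambda>j l. ?A a j l + ?A b j l)"
        using ch1[OF a] ch1[OF b] by (simp add: ipD_add2)
    qed
    have smul: "?A (\<lambda>j l. cc * a j l) = (\<lambda>j l. cc * ?A a j l)" if a: "a \<in> ?D" for a cc
    proof (rule ch2)
      show "(\<lambda>j l. cc * a j l) \<in> ?D" by (rule Dsp_smult[OF lbp g a])
      show "(\<lambda>j l. cc * ?A a j l) \<in> ?D" using ch1[OF a] by (intro Dsp_smult[OF lbp g]) auto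
      show "\<forall>c\<in>?D. ipD (rr \<alpha> Y k) (\<sigma> k x c) (\<lambda>j l. cc * a j l) = ipD (rr \<alpha> Y k) c (\<lambda>j l. cc * ?A a j l)"
        using ch1[OF a] by (simp add: ipD_smult2)
    qed
    show "(\<forall>a\<in>?D. ?A a \<in> ?D) \<and> lin_on ?D ?A"
      using maps add smul unfolding lin_on_def by blast
  qed
next
  show "bdp P \<alpha> Y (\<lambda>k x. adjD P \<alpha> (rr \<alpha> Y k) x (\<sigma> k x))"
    unfolding bdp_iff
  proof (intro allI impI)
    fix k x ts s b c
    assume kK: "k \<in> {1..KK \<alpha> Y}" and x: "x \<in> closure (Yk \<alpha> Y k) - Yk \<alpha> Y k" and dc: "decomp \<alpha> Y k x ts"
      and s: "s < length ts" and b: "b \<in> Dsp P \<alpha> (rr \<alpha> Y (ts ! s)) ((\<alpha> ^^ Rs \<alpha> Y ts s) x)"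
      and c: "c \<in> fibn P \<alpha> (Rs \<alpha> Y ts s) x"
    define R where "R = Rs \<alpha> Y ts s"
    define t where "t = ts ! s"
    define rt where "rt = rr \<alpha> Y t"
    define r where "r = rr \<alpha> Y k"
    define y where "y = (\<alpha> ^^ R) x"
    have xc: "x \<in> closure (Yk \<alpha> Y k)" using x by blast
    have le: "R + rt \<le> r" unfolding R_def rt_def r_def t_def by (rule dc_le[OF dc kK s])
    have tK: "t \<in> {1..KK \<alpha> Y}" unfolding t_def by (rule dc_t[OF dc kK s])
    have yc: "y \<in> closure (Yk \<alpha> Y t)" unfolding y_def t_def R_def by (rule dc_y[OF dc kK s])
    note gx = gcl[OF xc] and gy = gcl[OF yc]
    have mT: "\<forall>a\<in>Dsp P \<alpha> r x. \<sigma> k x a \<in> Dsp P \<alpha> r x" using InvD1[OF IH(1) kK xc] unfolding r_def by blast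
    have mT': "\<forall>a\<in>Dsp P \<alpha> rt y. \<sigma> t y a \<in> Dsp P \<alpha> rt y" using InvD1[OF IH(1) tK yc] unfolding rt_def by blast
    have lT: "lin_on (Dsp P \<alpha> r x) (\<sigma> k x)" using InvD2[OF IH(1) kK xc] unfolding r_def .
    have lT': "lin_on (Dsp P \<alpha> rt y) (\<sigma> t y)" using InvD2[OF IH(1) tK yc] unfolding rt_def .
    have bD: "b \<in> Dsp P \<alpha> rt y" using b unfolding rt_def y_def t_def R_def .
    have cF: "c \<in> fibn P \<alpha> R x" using c unfolding R_def .
    define B where "B = adjD P \<alpha> rt y (\<sigma> t y) b"
    have Bp: "B \<in> Dsp P \<alpha> rt y \<and> (\<forall>c'\<in>Dsp P \<alpha> rt y. ipD rt (\<sigma> t y c') b = ipD rt c' B)"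
      unfolding B_def by (rule adjC1[OF gy mT' lT' bD])
    have injD: "inj_comp R rt b c \<in> Dsp P \<alpha> r x"
      by (rule inj_in_Dsp[OF bD[unfolded y_def] cF le])
    have injB: "inj_comp R rt B c \<in> Dsp P \<alpha> r x"
      using Bp by (intro inj_in_Dsp[OF _ cF le]) (simp add: y_def)
    have bdpI: "\<sigma> k x (inj_comp (Rs \<alpha> Y ts s') (rr \<alpha> Y (ts ! s')) bw cc)
        = inj_comp (Rs \<alpha> Y ts s') (rr \<alpha> Y (ts ! s')) (\<sigma> (ts ! s') ((\<alpha> ^^ Rs \<alpha> Y ts s') x) bw) cc"
      if "s' < length ts" "bw \<in> Dsp P \<alpha> (rr \<alpha> Y (ts ! s')) ((\<alpha> ^^ Rs \<alpha> Y ts s') x)"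
        "cc \<in> fibn P \<alpha> (Rs \<alpha> Y ts s') x" for s' bw cc
      using IH(2) kK x dc that unfolding bdp_iff by blast
    have termw: "ipD r (\<sigma> k x (\<lambda>i0. if i0 = j then c' j else (\<lambda>_. 0))) (inj_comp R rt b c)
       = ipD r (\<lambda>i0. if i0 = j then c' j else (\<lambda>_. 0)) (inj_comp R rt B c)"
      if c': "c' \<in> Dsp P \<alpha> r x" and j: "j < r" for c' j
    proof -
      obtain s' where s': "s' < length ts" "Rs \<alpha> Y ts s' \<le> j" "j < Rs \<alpha> Y ts s' + rr \<alpha> Y (ts ! s')"
        using dc_cover[OF dc kK] j unfolding r_def by blast
      have cj: "c' j \<in> fibn P \<alpha> j x" using c' j unfolding Dsp_iff by blast
      obtain bw cc where bw: "bw \<in> Dsp P \<alpha> (rr \<alpha> Y (ts ! s')) ((\<alpha> ^^ Rs \<alpha> Y ts s') x)"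
        and cc: "cc \<in> fibn P \<alpha> (Rs \<alpha> Y ts s') x"
        and de: "(\<lambda>i0. if i0 = j then c' j else (\<lambda>_. 0)) = inj_comp (Rs \<alpha> Y ts s') (rr \<alpha> Y (ts ! s')) bw cc"
        using delta_split[OF cj s'(2,3)] by blast
      show ?thesis
      proof (cases "s' = s")
        case True
        have bw': "bw \<in> Dsp P \<alpha> rt y" using bw True unfolding rt_def y_def t_def R_def by simp
        have "ipD r (\<sigma> k x (\<lambda>i0. if i0 = j then c' j else (\<lambda>_. 0))) (inj_comp R rt b c)
            = ipD r (inj_comp R rt (\<sigma> t y bw) cc) (inj_comp R rt b c)"
          unfolding de bdpI[OF s' (1) bw cc] using True unfolding R_def rt_def t_def y_def by simp
        also have "\<dots> = ipD rt (\<sigma> t y bw) b * ipT R cc c" by (rule ipD_inj[OF le])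
        also have "\<dots> = ipD rt bw B * ipT R cc c" using Bp bw' by simp
        also have "\<dots> = ipD r (inj_comp R rt bw cc) (inj_comp R rt B c)" by (rule ipD_inj[OF le, symmetric])
        also have "\<dots> = ipD r (\<lambda>i0. if i0 = j then c' j else (\<lambda>_. 0)) (inj_comp R rt B c)"
          unfolding de using True unfolding R_def rt_def t_def by simp
        finally show ?thesis .
      next
        case False
        have dj: "Rs \<alpha> Y ts s' + rr \<alpha> Y (ts ! s') \<le> R \<or> R + rt \<le> Rs \<alpha> Y ts s'"
          using dc_disj[OF dc kK s'(1) s False] unfolding R_def rt_def t_def .
        have "ipD r (\<sigma> k x (\<lambda>i0. if i0 = j then c' j else (\<lambda>_. 0))) (inj_comp R rt b c) = 0"
          unfolding de bdpI[OF s'(1) bw cc] by (rule ipD_inj_disj[OF dj])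
        moreover have "ipD r (\<lambda>i0. if i0 = j then c' j else (\<lambda>_. 0)) (inj_comp R rt B c) = 0"
          unfolding de by (rule ipD_inj_disj[OF dj])
        ultimately show ?thesis by simp
      qed
    qed
    have key: "\<forall>c'\<in>Dsp P \<alpha> r x. ipD r (\<sigma> k x c') (inj_comp R rt b c) = ipD r c' (inj_comp R rt B c)"
    proof
      fix c' assume c': "c' \<in> Dsp P \<alpha> r x"
      define dl where "dl j = (\<lambda>i0. if i0 = j then c' j else (\<lambda>_::'n list. 0::complex))" for j
      have dlD: "dl j \<in> Dsp P \<alpha> r x" if "j < r" for j
        using c' that unfolding Dsp_iff dl_def by (auto simp: fibn_zero)
      have ce: "c' = (\<lambda>i l. \<Sum>j<r. dl j i l)"
      proof (intro ext)
        fix i l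
        show "c' i l = (\<Sum>j<r. dl j i l)"
        proof (cases "i < r")
          case True
          have "(\<Sum>j<r. dl j i l) = (\<Sum>j<r. if j = i then c' j l else 0)"
            by (rule sum.cong) (auto simp: dl_def)
          also have "\<dots> = c' i l" using True by (simp add: sum.delta)
          finally show ?thesis by simp
        next
          case False
          hence "c' i l = 0" using c' by (intro Dsp_supp) auto
          moreover have "(\<Sum>j<r. dl j i l) = 0" using False by (intro sum.neutral) (auto simp: dl_def)
          ultimately show ?thesis by simp
        qed
      qed
      have Tc: "\<sigma> k x c' = (\<lambda>i l. \<Sum>j<r. \<sigma> k x (dl j) i l)"
        by (subst ce, rule Dsp_lin_sum[OF lbp gx lT]) (auto intro: dlD)
      have "ipD r (\<sigma> k x c') (inj_comp R rt b c) = (\<Sum>j<r. ipD r (\<sigma> k x (dl j)) (inj_comp R rt b c))"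
        unfolding Tc ipD_sum1 ..
      also have "\<dots> = (\<Sum>j<r. ipD r (dl j) (inj_comp R rt B c))"
        using termw[OF c'] unfolding dl_def by (intro sum.cong) auto
      also have "\<dots> = ipD r (\<lambda>i l. \<Sum>j<r. dl j i l) (inj_comp R rt B c)"
        by (simp only: ipD_sum1)
      also have "\<dots> = ipD r c' (inj_comp R rt B c)"
        by (simp only: ce[symmetric])
      finally show "ipD r (\<sigma> k x c') (inj_comp R rt b c) = ipD r c' (inj_comp R rt B c)" .
    qed
    have "adjD P \<alpha> r x (\<sigma> k x) (inj_comp R rt b c) = inj_comp R rt B c"
      by (rule adjC2[OF gx mT lT injD injB key])
    thus "adjD P \<alpha> (rr \<alpha> Y k) x (\<sigma> k x) (inj_comp (Rs \<alpha> Y ts s) (rr \<alpha> Y (ts ! s)) b c) =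
       inj_comp (Rs \<alpha> Y ts s) (rr \<alpha> Y (ts ! s))
        (adjD P \<alpha> (rr \<alpha> Y (ts ! s)) ((\<alpha> ^^ Rs \<alpha> Y ts s) x) (\<sigma> (ts ! s) ((\<alpha> ^^ Rs \<alpha> Y ts s) x)) b) c"
      unfolding B_def r_def R_def rt_def t_def y_def .
  qed
qed

end

lemma tri3: "cmod (x + y + w) \<le> cmod x + cmod y + cmod w"
proof -
  have "cmod (x + y + w) \<le> cmod (x + y) + cmod w" by (rule norm_triangle_ineq)
  also have "\<dots> \<le> cmod x + cmod y + cmod w" using norm_triangle_ineq[of x y] by simp
  finally show ?thesis .
qed

lemma tri3m: "z = - p + q + w \<Longrightarrow> cmod z \<le> cmod p + cmod q + cmod w"
  using tri3[of "- p" q w] by simp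

lemma tri2m: "z = - p + c * q \<Longrightarrow> cmod z \<le> cmod p + cmod c * cmod q"
  using norm_triangle_ineq[of "- p" "c * q"] by (simp add: norm_mult)

lemma tri2: "z = p + q \<Longrightarrow> cmod z \<le> cmod p + cmod (q::complex)"
  using norm_triangle_ineq[of p q] by simp

context
  fixes X :: "'a::metric_space set" and P :: "'a \<Rightarrow> complex^'n::finite^'n" and \<alpha> :: "'a \<Rightarrow> 'a" and Y :: "'a set"
  assumes lbp: "line_bundle_proj X P" and aX: "\<And>z. z \<in> X \<Longrightarrow> \<alpha> z \<in> X"
    and clX: "\<And>k. closure (Yk \<alpha> Y k) \<subseteq> X"
begin

lemma gcl2: "x \<in> closure (Yk \<alpha> Y k) \<Longrightarrow> good X \<alpha> x"
  by (rule good_cl[OF lbp]) (use aX clX in auto)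

lemma caseLim:
  fixes g :: "nat \<Rightarrow> ('a, 'n) fam" and h :: "('a, 'n) fam"
  assumes gI: "\<And>n. Inv P \<alpha> Y (g n) \<and> bdp P \<alpha> Y (g n)"
    and hD: "\<forall>k\<in>{1..KK \<alpha> Y}. \<forall>x\<in>closure (Yk \<alpha> Y k). \<forall>a\<in>Dsp P \<alpha> (rr \<alpha> Y k) x. h k x a \<in> Dsp P \<alpha> (rr \<alpha> Y k) x"
    and conv: "\<forall>e>0. \<exists>N. \<forall>n\<ge>N. \<forall>k\<in>{1..KK \<alpha> Y}. \<forall>x\<in>closure (Yk \<alpha> Y k). \<forall>a\<in>Dsp P \<alpha> (rr \<alpha> Y k) x.
            normD (rr \<alpha> Y k) (\<lambda>j l. g n k x a j l - h k x a j l) \<le> e * normD (rr \<alpha> Y k) a"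
  shows "Inv P \<alpha> Y h \<and> bdp P \<alpha> Y h"
proof -
  have cc: "\<exists>N. \<forall>k x a j (l::'n list). k \<in> {1..KK \<alpha> Y} \<longrightarrow> x \<in> closure (Yk \<alpha> Y k) \<longrightarrow> a \<in> Dsp P \<alpha> (rr \<alpha> Y k) x \<longrightarrow>
      j < rr \<alpha> Y k \<longrightarrow> length l = j \<longrightarrow> cmod (g N k x a j l - h k x a j l) \<le> e * normD (rr \<alpha> Y k) a"
    if e: "e > 0" for e
  proof -
    obtain N where N: "\<forall>n\<ge>N. \<forall>k\<in>{1..KK \<alpha> Y}. \<forall>x\<in>closure (Yk \<alpha> Y k). \<forall>a\<in>Dsp P \<alpha> (rr \<alpha> Y k) x.
            normD (rr \<alpha> Y k) (\<lambda>j l. g n k x a j l - h k x a j l) \<le> e * normD (rr \<alpha> Y k) a"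
      using conv e by blast
    show ?thesis
    proof (intro exI[of _ N] allI impI)
      fix k x a j and l :: "'n list"
      assume k: "k \<in> {1..KK \<alpha> Y}" and x: "x \<in> closure (Yk \<alpha> Y k)" and a: "a \<in> Dsp P \<alpha> (rr \<alpha> Y k) x"
        and j: "j < rr \<alpha> Y k" and l: "length l = j"
      have "cmod (g N k x a j l - h k x a j l) \<le> normD (rr \<alpha> Y k) (\<lambda>j l. g N k x a j l - h k x a j l)"
        using coord_le_normD[OF j l, of "\<lambda>j l. g N k x a j l - h k x a j l"] by simp
      also have "\<dots> \<le> e * normD (rr \<alpha> Y k) a" using N k x a by blast
      finally show "cmod (g N k x a j l - h k x a j l) \<le> e * normD (rr \<alpha> Y k) a" .
    qed
  qed
  show ?thesis
  proof
    show "Inv P \<alpha> Y h"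
    proof (rule InvI)
      fix k x assume kK: "k \<in> {1..KK \<alpha> Y}" and x: "x \<in> closure (Yk \<alpha> Y k)"
      let ?D = "Dsp P \<alpha> (rr \<alpha> Y k) x" and ?r = "rr \<alpha> Y k"
      note gx = gcl2[OF x]
      have hm: "h k x a \<in> ?D" if "a \<in> ?D" for a using hD kK x that by blast
      have add: "h k x (\<lambda>j l. a j l + b j l) = (\<lambda>j l. h k x a j l + h k x b j l)" if a: "a \<in> ?D" and b: "b \<in> ?D" for a b
      proof (rule Dsp_eqI[OF lbp gx])
        have ab: "(\<lambda>j l. a j l + b j l) \<in> ?D" by (rule Dsp_add[OF lbp gx a b])
        show "h k x (\<lambda>j l. a j l + b j l) \<in> ?D" by (rule hm[OF ab])
        show "(\<lambda>j l. h k x a j l + h k x b j l) \<in> ?D" by (rule Dsp_add[OF lbp gx hm[OF a] hm[OF b]])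
        fix j and l :: "'n list" assume j: "j < ?r" and l: "length l = j"
        let ?K = "normD ?r (\<lambda>j l. a j l + b j l) + normD ?r a + normD ?r b"
        have "h k x (\<lambda>j l. a j l + b j l) j l - (h k x a j l + h k x b j l) = 0"
        proof (rule small_zero)
          show "0 \<le> ?K" by (simp add: normD_nonneg)
          fix e :: real assume e: "e > 0"
          obtain N where N: "\<forall>k x a j (l::'n list). k \<in> {1..KK \<alpha> Y} \<longrightarrow> x \<in> closure (Yk \<alpha> Y k) \<longrightarrow> a \<in> Dsp P \<alpha> (rr \<alpha> Y k) x \<longrightarrow>
              j < rr \<alpha> Y k \<longrightarrow> length l = j \<longrightarrow> cmod (g N k x a j l - h k x a j l) \<le> e * normD (rr \<alpha> Y k) a"
            using cc[OF e] by blast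
          have lg: "lin_on ?D (g N k x)" using InvD2[OF conjunct1[OF gI] kK x] .
          have G: "g N k x (\<lambda>j l. a j l + b j l) j l = g N k x a j l + g N k x b j l"
            using lin_addD[OF lg a b] by simp
          have "h k x (\<lambda>j l. a j l + b j l) j l - (h k x a j l + h k x b j l)
              = - (g N k x (\<lambda>j l. a j l + b j l) j l - h k x (\<lambda>j l. a j l + b j l) j l)
                + (g N k x a j l - h k x a j l) + (g N k x b j l - h k x b j l)"
            using G by (simp add: algebra_simps)
          hence "cmod (h k x (\<lambda>j l. a j l + b j l) j l - (h k x a j l + h k x b j l))
              \<le> cmod (g N k x (\<lambda>j l. a j l + b j l) j l - h k x (\<lambda>j l. a j l + b j l) j l)
                + cmod (g N k x a j l - h k x a j l) + cmod (g N k x b j l - h k x b j l)"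
            by (rule tri3m)
          also have "\<dots> \<le> e * normD ?r (\<lambda>j l. a j l + b j l) + e * normD ?r a + e * normD ?r b"
            using N kK x a b ab j l by (intro add_mono) blast+
          also have "\<dots> = e * ?K" by (simp add: algebra_simps)
          finally show "cmod (h k x (\<lambda>j l. a j l + b j l) j l - (h k x a j l + h k x b j l)) \<le> e * ?K" .
        qed
        thus "h k x (\<lambda>j l. a j l + b j l) j l = h k x a j l + h k x b j l" by simp
      qed
      have smul: "h k x (\<lambda>j l. c * a j l) = (\<lambda>j l. c * h k x a j l)" if a: "a \<in> ?D" for a c
      proof (rule Dsp_eqI[OF lbp gx])
        have ca: "(\<lambda>j l. c * a j l) \<in> ?D" by (rule Dsp_smult[OF lbp gx a])
        show "h k x (\<lambda>j l. c * a j l) \<in> ?D" by (rule hm[OF ca])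
        show "(\<lambda>j l. c * h k x a j l) \<in> ?D" by (rule Dsp_smult[OF lbp gx hm[OF a]])
        fix j and l :: "'n list" assume j: "j < ?r" and l: "length l = j"
        let ?K = "normD ?r (\<lambda>j l. c * a j l) + cmod c * normD ?r a"
        have "h k x (\<lambda>j l. c * a j l) j l - c * h k x a j l = 0"
        proof (rule small_zero)
          show "0 \<le> ?K" by (simp add: normD_nonneg)
          fix e :: real assume e: "e > 0"
          obtain N where N: "\<forall>k x a j (l::'n list). k \<in> {1..KK \<alpha> Y} \<longrightarrow> x \<in> closure (Yk \<alpha> Y k) \<longrightarrow> a \<in> Dsp P \<alpha> (rr \<alpha> Y k) x \<longrightarrow>
              j < rr \<alpha> Y k \<longrightarrow> length l = j \<longrightarrow> cmod (g N k x a j l - h k x a j l) \<le> e * normD (rr \<alpha> Y k) a"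
            using cc[OF e] by blast
          have lg: "lin_on ?D (g N k x)" using InvD2[OF conjunct1[OF gI] kK x] .
          have G: "g N k x (\<lambda>j l. c * a j l) j l = c * g N k x a j l"
            using lin_smultD[OF lg a] by simp
          have "h k x (\<lambda>j l. c * a j l) j l - c * h k x a j l
              = - (g N k x (\<lambda>j l. c * a j l) j l - h k x (\<lambda>j l. c * a j l) j l)
                + c * (g N k x a j l - h k x a j l)"
            using G by (simp add: algebra_simps)
          hence "cmod (h k x (\<lambda>j l. c * a j l) j l - c * h k x a j l)
              \<le> cmod (g N k x (\<lambda>j l. c * a j l) j l - h k x (\<lambda>j l. c * a j l) j l)
                + cmod c * cmod (g N k x a j l - h k x a j l)"
            by (rule tri2m)
          also have "\<dots> \<le> e * normD ?r (\<lambda>j l. c * a j l) + cmod c * (e * normD ?r a)"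
            using N kK x a ca j l by (intro add_mono mult_left_mono) auto
          also have "\<dots> = e * ?K" by (simp add: algebra_simps)
          finally show "cmod (h k x (\<lambda>j l. c * a j l) j l - c * h k x a j l) \<le> e * ?K" .
        qed
        thus "h k x (\<lambda>j l. c * a j l) j l = c * h k x a j l" by simp
      qed
      show "(\<forall>a\<in>?D. h k x a \<in> ?D) \<and> lin_on ?D (h k x)"
        using hm add smul unfolding lin_on_def by blast
    qed
  next
    show "bdp P \<alpha> Y h"
      unfolding bdp_iff
    proof (intro allI impI)
      fix k x ts s b c
      assume kK: "k \<in> {1..KK \<alpha> Y}" and x: "x \<in> closure (Yk \<alpha> Y k) - Yk \<alpha> Y k" and dc: "decomp \<alpha> Y k x ts"
        and s: "s < length ts" and b: "b \<in> Dsp P \<alpha> (rr \<alpha> Y (ts ! s)) ((\<alpha> ^^ Rs \<alpha> Y ts s) x)"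
        and c: "c \<in> fibn P \<alpha> (Rs \<alpha> Y ts s) x"
      define R where "R = Rs \<alpha> Y ts s"
      define t where "t = ts ! s"
      define rt where "rt = rr \<alpha> Y t"
      define r where "r = rr \<alpha> Y k"
      define y where "y = (\<alpha> ^^ R) x"
      have xc: "x \<in> closure (Yk \<alpha> Y k)" using x by blast
      have le: "R + rt \<le> r" unfolding R_def rt_def r_def t_def by (rule dc_le[OF dc kK s])
      have tK: "t \<in> {1..KK \<alpha> Y}" unfolding t_def by (rule dc_t[OF dc kK s])
      have yc: "y \<in> closure (Yk \<alpha> Y t)" unfolding y_def t_def R_def by (rule dc_y[OF dc kK s])
      note gx = gcl2[OF xc]
      have bD: "b \<in> Dsp P \<alpha> rt y" using b unfolding rt_def y_def t_def R_def .
      have cF: "c \<in> fibn P \<alpha> R x" using c unfolding R_def .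
      have injD: "inj_comp R rt b c \<in> Dsp P \<alpha> r x"
        by (rule inj_in_Dsp[OF bD[unfolded y_def] cF le])
      have hb: "h t y b \<in> Dsp P \<alpha> rt y" using hD tK yc bD unfolding rt_def by blast
      have L: "h k x (inj_comp R rt b c) \<in> Dsp P \<alpha> r x" using hD kK xc injD unfolding r_def by blast
      have Rr: "inj_comp R rt (h t y b) c \<in> Dsp P \<alpha> r x"
        by (rule inj_in_Dsp[OF _ cF le]) (use hb in \<open>simp add: y_def\<close>)
      have "h k x (inj_comp R rt b c) = inj_comp R rt (h t y b) c"
      proof (rule Dsp_eqI[OF lbp gx L Rr])
        fix j and l :: "'n list" assume j: "j < r" and l: "length l = j"
        let ?M = "cmod (c (drop (j - R) l))"
        let ?K = "normD r (inj_comp R rt b c) + normD rt b * ?M"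
        have "h k x (inj_comp R rt b c) j l - inj_comp R rt (h t y b) c j l = 0"
        proof (rule small_zero)
          show "0 \<le> ?K" by (simp add: normD_nonneg)
          fix e :: real assume e: "e > 0"
          obtain N where N: "\<forall>k x a j (l::'n list). k \<in> {1..KK \<alpha> Y} \<longrightarrow> x \<in> closure (Yk \<alpha> Y k) \<longrightarrow> a \<in> Dsp P \<alpha> (rr \<alpha> Y k) x \<longrightarrow>
              j < rr \<alpha> Y k \<longrightarrow> length l = j \<longrightarrow> cmod (g N k x a j l - h k x a j l) \<le> e * normD (rr \<alpha> Y k) a"
            using cc[OF e] by blast
          have gb: "g N k x (inj_comp R rt b c) = inj_comp R rt (g N t y b) c"
            using conjunct2[OF gI[of N]] kK x dc s b c unfolding bdp_iff R_def rt_def t_def y_def by blast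
          define d where "d = (\<lambda>j l. g N t y b j l - h t y b j l)"
          have dl: "inj_comp R rt (g N t y b) c j l - inj_comp R rt (h t y b) c j l = inj_comp R rt d c j l"
            unfolding d_def inj_diff by simp
          have e1: "cmod (h k x (inj_comp R rt b c) j l - g N k x (inj_comp R rt b c) j l) \<le> e * normD r (inj_comp R rt b c)"
          proof -
            have "cmod (g N k x (inj_comp R rt b c) j l - h k x (inj_comp R rt b c) j l) \<le> e * normD r (inj_comp R rt b c)"
              using N kK xc injD j l unfolding r_def by blast
            thus ?thesis by (simp add: norm_minus_commute)
          qed
          have e2: "cmod (inj_comp R rt d c j l) \<le> e * normD rt b * ?M"
          proof (cases "R \<le> j \<and> j < R + rt")
            case True
            hence "inj_comp R rt d c j l = d (j - R) (take (j - R) l) * c (drop (j - R) l)"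
              using l unfolding inj_comp_def ttens_def by simp
            moreover have "cmod (d (j - R) (take (j - R) l)) \<le> e * normD rt b"
              using N tK yc bD True l unfolding d_def rt_def by auto
            ultimately show ?thesis by (simp add: norm_mult mult_right_mono)
          next
            case False
            hence "inj_comp R rt d c j l = 0" unfolding inj_comp_def by auto
            thus ?thesis using e by (simp add: normD_nonneg)
          qed
          have "h k x (inj_comp R rt b c) j l - inj_comp R rt (h t y b) c j l
              = (h k x (inj_comp R rt b c) j l - g N k x (inj_comp R rt b c) j l) + inj_comp R rt d c j l"
            using gb dl by (simp add: algebra_simps)
          hence "cmod (h k x (inj_comp R rt b c) j l - inj_comp R rt (h t y b) c j l)
              \<le> cmod (h k x (inj_comp R rt b c) j l - g N k x (inj_comp R rt b c) j l) + cmod (inj_comp R rt d c j l)"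
            by (rule tri2)
          also have "\<dots> \<le> e * normD r (inj_comp R rt b c) + e * normD rt b * ?M"
            using e1 e2 by (rule add_mono)
          also have "\<dots> = e * ?K" by (simp add: algebra_simps)
          finally show "cmod (h k x (inj_comp R rt b c) j l - inj_comp R rt (h t y b) c j l) \<le> e * ?K" .
        qed
        thus "h k x (inj_comp R rt b c) j l = inj_comp R rt (h t y b) c j l" by simp
      qed
      thus "h k x (inj_comp (Rs \<alpha> Y ts s) (rr \<alpha> Y (ts ! s)) b c) =
         inj_comp (Rs \<alpha> Y ts s) (rr \<alpha> Y (ts ! s)) (h (ts ! s) ((\<alpha> ^^ Rs \<alpha> Y ts s) x) b) c"
        unfolding R_def rt_def t_def y_def .
    qed
  qed
qed

lemma main_ind: "\<sigma> \<in> piImg P \<alpha> X Y \<Longrightarrow> Inv P \<alpha> Y \<sigma> \<and> bdp P \<alpha> Y \<sigma>"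
proof (induction rule: piImg.induct)
  case (gen_C f) show ?case by (rule caseC[OF lbp]) (use aX clX in auto)
next
  case (gen_E \<xi>) show ?case by (rule caseE[OF lbp _ _ gen_E]) (use aX clX in auto)
next
  case (add \<sigma> \<tau>) show ?case
    by (rule caseAdd[OF lbp _ _ conjunct1[OF add.IH(1)] conjunct2[OF add.IH(1)] conjunct1[OF add.IH(2)] conjunct2[OF add.IH(2)]])
       (use aX clX in auto)
next
  case (smult \<sigma> c) show ?case
    by (rule caseSmult[OF lbp _ _ conjunct1[OF smult.IH] conjunct2[OF smult.IH]]) (use aX clX in auto)
next
  case (comp \<sigma> \<tau>) show ?case
    by (rule caseComp[OF lbp _ _ conjunct1[OF comp.IH(1)] conjunct2[OF comp.IH(1)] conjunct1[OF comp.IH(2)] conjunct2[OF comp.IH(2)]])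
       (use aX clX in auto)
next
  case (adj \<sigma>) show ?case
    by (rule caseAdj[OF lbp _ _ conjunct1[OF adj.IH] conjunct2[OF adj.IH]]) (use aX clX in auto)
next
  case (lim g h) show ?case
    by (rule caseLim[OF lim.IH lim.hyps(2) lim.hyps(3)])
qed

end

theorem lemma8p2:
  fixes X :: "'a::metric_space set" and \<alpha> :: "'a \<Rightarrow> 'a"
    and P :: "'a \<Rightarrow> complex^'n::finite^'n" and Y :: "'a set"
    and \<sigma> :: "('a, 'n) fam"
  assumes "compact X" and "infinite X" and "minimal_homeo X \<alpha>"
    and "line_bundle_proj X P"
    and "Y \<subseteq> X" and "closedin (top_of_set X) Y"
    and "\<exists>U. openin (top_of_set X) U \<and> U \<noteq> {} \<and> U \<subseteq> Y"
    and "\<sigma> \<in> piImg P \<alpha> X Y"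
  shows "bdp P \<alpha> Y \<sigma>"
proof -
  obtain \<beta> where hom: "homeomorphism X X \<alpha> \<beta>" using assms(3) unfolding minimal_homeo_def by blast
  have img: "\<alpha> ` X = X" using hom unfolding homeomorphism_def by blast
  have aX: "\<alpha> z \<in> X" if "z \<in> X" for z using img that by blast
  have cX: "closed X" using assms(1) by (rule compact_imp_closed)
  have clX: "closure (Yk \<alpha> Y k) \<subseteq> X" for k
  proof (rule closure_minimal)
    show "Yk \<alpha> Y k \<subseteq> X" using assms(5) unfolding Yk_def by blast
    show "closed X" by (rule cX)
  qed
  have "Inv P \<alpha> Y \<sigma> \<and> bdp P \<alpha> Y \<sigma>"
    by (rule main_ind[OF assms(4)]) (use aX clX assms(8) in auto)
  thus ?thesis by blast
qed

end
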